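(* Let $G$ be a grid-labelled graph of type $(3,3)$ all of whose edges are diagonal. Then $G$ satisfies the degree criterion if and only if $E(G)$ can be partitioned into edge sets of subgraphs $X_1,\dots,X_n$ each of which is locally isomorphic to a rotation of one of the building blocks $B_2,B_3,B_4,B_5$.
   Context: A grid-labelled graph of type $(a,b)$ is a simple graph whose vertex set is the grid $[a]\times[b]$. An edge $\{(i,j),(k,l)\}$ is diagonal if $i\neq k$ and $j\neq l$. The partial transpose $\Gamma(G)$ is the grid-labelled graph with edge set $\{\{(k,j),(i,l)\}:\{(i,j),(k,l)\}\in E(G)\}$; $G$ satisfies the degree criterion if every vertex has the same degree in $G$ and in $\Gamma(G)$. Two grid-labelled graphs $G,H$ of type $(a,b)$ are locally isomorphic if there are permutations $\pi$ of $[a]$ and $\sigma$ of $[b]$ with $\{(i,j),(k,l)\}\in E(G)\iff\{(\pi(i),\sigma(j)),(\pi(k),\sigma(l))\}\in E(H)$. A rotation of a type $(3,3)$ graph is its image under a power (including the identity) of the map $(i,j)\mapsto(j,4-i)$ on vertices. Building blocks (type $(3,3)$): $B_2$ with edges $\{(1,1),(2,2)\},\{(1,2),(2,1)\}$; $B_3$ with edges $\{(1,1),(2,2)\},\{(1,2),(2,3)\},\{(2,1),(1,3)\}$; $B_4$ with edges $\{(1,1),(2,3)\},\{(2,1),(3,3)\},\{(1,2),(3,1)\},\{(1,3),(3,2)\}$; $B_5$ with edges $\{(1,1),(3,3)\},\{(1,2),(2,1)\},\{(1,3),(2,2)\},\{(2,2),(3,1)\},\{(2,3),(3,2)\}$.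 *)

theory Defs
  imports Main "HOL-Combinatorics.Permutations"
begin

type_synonym vtx = "nat \<times> nat"

definition grid :: "nat \<Rightarrow> nat \<Rightarrow> vtx set" where
  "grid a b = {1..a} \<times> {1..b}"

definition grid_graph :: "nat \<Rightarrow> nat \<Rightarrow> vtx set set \<Rightarrow> bool" where
  "grid_graph a b E \<longleftrightarrow>
     (\<forall>e\<in>E. \<exists>u v. u \<in> grid a b \<and> v \<in> grid a b \<and> u \<noteq> v \<and> e = {u, v})"

definition diagonal_edge :: "vtx set \<Rightarrow> bool" where
  "diagonal_edge e \<longleftrightarrow> (\<exists>i j k l. e = {(i,j),(k,l)} \<and> i \<noteq> k \<and> j \<noteq> l)"

definition partial_transpose :: "vtx set set \<Rightarrow> vtx set set" where
  "partial_transpose E = {{(k,j),(i,l)} | i j k l. {(i,j),(k,l)} \<in> E}"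

definition deg :: "vtx set set \<Rightarrow> vtx \<Rightarrow> nat" where
  "deg E v = card {e \<in> E. v \<in> e}"

definition degree_criterion :: "nat \<Rightarrow> nat \<Rightarrow> vtx set set \<Rightarrow> bool" where
  "degree_criterion a b E \<longleftrightarrow> (\<forall>v\<in>grid a b. deg E v = deg (partial_transpose E) v)"

definition locally_isomorphic :: "nat \<Rightarrow> nat \<Rightarrow> vtx set set \<Rightarrow> vtx set set \<Rightarrow> bool" where
  "locally_isomorphic a b G H \<longleftrightarrow>
     (\<exists>\<pi> \<sigma>. \<pi> permutes {1..a} \<and> \<sigma> permutes {1..b} \<and>
        (\<forall>i\<in>{1..a}. \<forall>j\<in>{1..b}. \<forall>k\<in>{1..a}. \<forall>l\<in>{1..b}.
           {(i,j),(k,l)} \<in> G \<longleftrightarrow> {(\<pi> i, \<sigma> j),(\<pi> k, \<sigma> l)} \<in> H))"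

definition rot :: "vtx \<Rightarrow> vtx" where
  "rot p = (snd p, 4 - fst p)"

definition rotate_graph :: "nat \<Rightarrow> vtx set set \<Rightarrow> vtx set set" where
  "rotate_graph r E = (\<lambda>e. (rot ^^ r) ` e) ` E"

definition is_rotation :: "vtx set set \<Rightarrow> vtx set set \<Rightarrow> bool" where
  "is_rotation H B \<longleftrightarrow> (\<exists>r::nat. H = rotate_graph r B)"

definition B2 :: "vtx set set" where
  "B2 = {{(1,1),(2,2)}, {(1,2),(2,1)}}"
definition B3 :: "vtx set set" where
  "B3 = {{(1,1),(2,2)}, {(1,2),(2,3)}, {(2,1),(1,3)}}"
definition B4 :: "vtx set set" where
  "B4 = {{(1,1),(2,3)}, {(2,1),(3,3)}, {(1,2),(3,1)}, {(1,3),(3,2)}}"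
definition B5 :: "vtx set set" where
  "B5 = {{(1,1),(3,3)}, {(1,2),(2,1)}, {(1,3),(2,2)}, {(2,2),(3,1)}, {(2,3),(3,2)}}"

end

theory Submission
  imports Defs
begin


definition pt :: "vtx set \<Rightarrow> vtx set" where
  "pt e = {(fst u, snd w) | u w. u \<in> e \<and> w \<in> e \<and> u \<noteq> w}"

lemma pt_2: "p \<noteq> q \<Longrightarrow> pt {p,q} = {(fst p, snd q), (fst q, snd p)}"
  unfolding pt_def by blast

lemma pt_pt: "p \<noteq> q \<Longrightarrow> pt (pt {p,q}) = {p,q}"
proof -
  assume "p \<noteq> q"
  then have "(fst p, snd q) \<noteq> (fst q, snd p)" by (auto simp: prod_eq_iff)
  then show ?thesis using \<open>p \<noteq> q\<close> by (auto simp: pt_2)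
qed

definition dbl :: "vtx set \<Rightarrow> vtx set set \<Rightarrow> bool" where
  "dbl S E \<longleftrightarrow> (\<forall>e\<in>E. \<exists>p q. p \<in> S \<and> q \<in> S \<and> p \<noteq> q \<and> e = {p,q})"

lemma grid_graph_dbl: "grid_graph a b E = dbl (grid a b) E"
  unfolding grid_graph_def dbl_def by blast

lemma partial_transpose_eq:
  assumes "dbl S E"
  shows "partial_transpose E = pt ` E"
proof
  show "partial_transpose E \<subseteq> pt ` E"
  proof
    fix x assume "x \<in> partial_transpose E"
    then obtain i j k l where x: "x = {(k,j),(i,l)}" and e: "{(i,j),(k,l)} \<in> E"
      unfolding partial_transpose_def by blast
    from assms e obtain p q where "p \<noteq> q" "{(i,j),(k,l)} = {p,q}" unfolding dbl_def by blast
    then have "(i,j) \<noteq> (k,l)" by auto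
    then have "pt {(i,j),(k,l)} = x" using x by (auto simp: pt_2)
    with e show "x \<in> pt ` E" by blast
  qed
next
  show "pt ` E \<subseteq> partial_transpose E"
  proof
    fix x assume "x \<in> pt ` E"
    then obtain e where e: "e \<in> E" "x = pt e" by blast
    from assms e obtain p q where "p \<noteq> q" "e = {p,q}" unfolding dbl_def by blast
    then have "x = {(fst q, snd p), (fst p, snd q)}" using e by (auto simp: pt_2)
    moreover have "{(fst p, snd p), (fst q, snd q)} \<in> E" using e \<open>e = {p,q}\<close> by simp
    ultimately show "x \<in> partial_transpose E" unfolding partial_transpose_def by blast
  qed
qed

lemma dbl_inj_pt: "dbl S E \<Longrightarrow> inj_on pt E"
  unfolding dbl_def inj_on_def by (metis pt_pt)

definition bal :: "vtx set set \<Rightarrow> bool" where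
  "bal E \<longleftrightarrow> (\<forall>v\<in>grid 3 3. card {e\<in>E. v \<in> e} = card {e\<in>E. v \<in> pt e})"

lemma dc_iff:
  assumes "grid_graph 3 3 E"
  shows "degree_criterion 3 3 E \<longleftrightarrow> bal E"
proof -
  have d: "dbl (grid 3 3) E" using assms grid_graph_dbl by simp
  have "deg (partial_transpose E) v = card {e\<in>E. v \<in> pt e}" for v
  proof -
    have "{e' \<in> pt ` E. v \<in> e'} = pt ` {e\<in>E. v \<in> pt e}" by blast
    moreover have "inj_on pt {e\<in>E. v \<in> pt e}" using dbl_inj_pt[OF d] by (rule inj_on_subset) auto
    ultimately show ?thesis unfolding deg_def partial_transpose_eq[OF d] by (simp add: card_image)
  qed
  then show ?thesis unfolding degree_criterion_def bal_def deg_def by simp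
qed

lemma finite_dbl: "finite S \<Longrightarrow> dbl S E \<Longrightarrow> finite E"
proof -
  assume "finite S" "dbl S E"
  then have "E \<subseteq> Pow S" unfolding dbl_def by auto
  then show "finite E" using \<open>finite S\<close> by (meson finite_Pow_iff finite_subset)
qed

lemma finite_grid: "finite (grid a b)" unfolding grid_def by simp

lemma card_split:
  assumes "finite X" "finite Y" "X \<inter> Y = {}"
  shows "card {e\<in>X \<union> Y. P e} = card {e\<in>X. P e} + card {e\<in>Y. P e}"
proof -
  have "{e\<in>X \<union> Y. P e} = {e\<in>X. P e} \<union> {e\<in>Y. P e}" by blast
  moreover have "{e\<in>X. P e} \<inter> {e\<in>Y. P e} = {}" using assms(3) by blast
  ultimately show ?thesis using assms(1,2) by (simp add: card_Un_disjoint)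
qed

lemma bal_union:
  assumes "finite X" "finite Y" "X \<inter> Y = {}" "bal X" "bal Y"
  shows "bal (X \<union> Y)"
  using assms(4,5) unfolding bal_def card_split[OF assms(1-3)] by simp

lemma bal_diff:
  assumes "finite E" "X \<subseteq> E" "bal E" "bal X"
  shows "bal (E - X)"
proof -
  have fX: "finite X" using assms(1,2) finite_subset by blast
  have fE: "finite (E - X)" using assms(1) by simp
  have e: "E = X \<union> (E - X)" using assms(2) by blast
  have d: "X \<inter> (E - X) = {}" by blast
  have c: "card {e\<in>E. P e} = card {e\<in>X. P e} + card {e\<in>E - X. P e}" for P
  proof -
    have "{e\<in>E. P e} = {e\<in>X \<union> (E - X). P e}" using assms(2) by blast
    then show ?thesis using card_split[OF fX fE d, of P] by (simp only:)
  qed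
  show ?thesis using assms(3,4) unfolding bal_def c by simp
qed

lemma bal_Union:
  assumes "\<forall>s<length Xs. \<forall>t<length Xs. s \<noteq> t \<longrightarrow> Xs ! s \<inter> Xs ! t = {}"
    and "\<forall>X\<in>set Xs. bal X \<and> finite X"
  shows "bal (\<Union>(set Xs))"
  using assms
proof (induction Xs)
  case Nil
  then show ?case by (simp add: bal_def)
next
  case (Cons X Xs)
  have d: "\<forall>s<length Xs. \<forall>t<length Xs. s \<noteq> t \<longrightarrow> Xs ! s \<inter> Xs ! t = {}"
  proof (intro allI impI)
    fix s t assume "s < length Xs" "t < length Xs" "s \<noteq> t"
    then have "Suc s < length (X # Xs)" "Suc t < length (X # Xs)" "Suc s \<noteq> Suc t" by auto
    then have "(X # Xs) ! Suc s \<inter> (X # Xs) ! Suc t = {}" using Cons.prems(1) by blast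
    then show "Xs ! s \<inter> Xs ! t = {}" by simp
  qed
  have "X \<inter> \<Union>(set Xs) = {}"
  proof -
    have "X \<inter> Y = {}" if "Y \<in> set Xs" for Y
    proof -
      obtain t where "t < length Xs" "Y = Xs ! t" using \<open>Y \<in> set Xs\<close> by (metis in_set_conv_nth)
      then have "0 < length (X # Xs)" "Suc t < length (X # Xs)" "0 \<noteq> Suc t" by auto
      then have "(X # Xs) ! 0 \<inter> (X # Xs) ! Suc t = {}" using Cons.prems(1) by blast
      then show ?thesis using \<open>Y = Xs ! t\<close> by simp
    qed
    then show ?thesis by blast
  qed
  moreover have "bal (\<Union>(set Xs))" using Cons.IH[OF d] Cons.prems(2) by simp
  moreover have "finite (\<Union>(set Xs))" using Cons.prems(2) by auto
  moreover have "finite X" "bal X" using Cons.prems(2) by auto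
  ultimately show ?case using bal_union[of X "\<Union>(set Xs)"] by simp
qed




lemma pt_sub_grid: "p \<in> grid 3 3 \<Longrightarrow> q \<in> grid 3 3 \<Longrightarrow> p \<noteq> q \<Longrightarrow> pt {p,q} \<subseteq> grid 3 3"
  by (auto simp: pt_2 grid_def)

lemma dbl_image:
  assumes "inj_on f S" "f ` S \<subseteq> S" "dbl S X"
  shows "dbl S ((\<lambda>e. f ` e) ` X)"
  unfolding dbl_def
proof
  fix e' assume "e' \<in> (\<lambda>e. f ` e) ` X"
  then obtain e where e: "e \<in> X" "e' = f ` e" by blast
  then obtain p q where "p \<in> S" "q \<in> S" "p \<noteq> q" "e = {p,q}" using assms(3) unfolding dbl_def by blast
  then show "\<exists>p q. p \<in> S \<and> q \<in> S \<and> p \<noteq> q \<and> e' = {p, q}"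
    using e assms(1,2) by (intro exI[of _ "f p"] exI[of _ "f q"]) (auto simp: inj_on_def)
qed

lemma ball_onto:
  assumes "f ` A = A" shows "(\<forall>w\<in>A. P w) \<longleftrightarrow> (\<forall>v\<in>A. P (f v))"
proof -
  have "(\<forall>w\<in>f ` A. P w) \<longleftrightarrow> (\<forall>v\<in>A. P (f v))" by blast
  then show ?thesis by (simp add: assms)
qed

lemma bal_image:
  assumes inj: "inj_on f (grid 3 3)" and onto: "f ` grid 3 3 = grid 3 3"
    and comm: "\<And>p q. p \<in> grid 3 3 \<Longrightarrow> q \<in> grid 3 3 \<Longrightarrow> p \<noteq> q \<Longrightarrow> pt {f p, f q} = f ` pt {p,q}"
    and X: "dbl (grid 3 3) X"
  shows "bal ((\<lambda>e. f ` e) ` X) \<longleftrightarrow> bal X"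
proof -
  let ?G = "grid 3 3"
  let ?F = "\<lambda>e. f ` e"
  have sub: "e \<subseteq> ?G \<and> pt e \<subseteq> ?G \<and> pt (f ` e) = f ` pt e" if "e \<in> X" for e
  proof -
    obtain p q where "p \<in> ?G" "q \<in> ?G" "p \<noteq> q" "e = {p,q}" using X \<open>e \<in> X\<close> unfolding dbl_def by blast
    then show ?thesis using pt_sub_grid comm by auto
  qed
  have injF: "inj_on ?F (Pow ?G)" using inj_on_image_Pow[OF inj] .
  have k1: "card {e'\<in>?F ` X. f v \<in> e'} = card {e\<in>X. v \<in> e}" if v: "v \<in> ?G" for v
  proof -
    have "{e'\<in>?F ` X. f v \<in> e'} = ?F ` {e\<in>X. v \<in> e}"
    proof -
      have "f v \<in> f ` e \<longleftrightarrow> v \<in> e" if "e \<in> X" for e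
        using sub[OF that] inj v by (meson inj_on_image_mem_iff)
      then show ?thesis by blast
    qed
    moreover have "inj_on ?F {e\<in>X. v \<in> e}" by (rule inj_on_subset[OF injF]) (use sub in blast)
    ultimately show ?thesis by (simp add: card_image)
  qed
  have k2: "card {e'\<in>?F ` X. f v \<in> pt e'} = card {e\<in>X. v \<in> pt e}" if v: "v \<in> ?G" for v
  proof -
    have "{e'\<in>?F ` X. f v \<in> pt e'} = ?F ` {e\<in>X. v \<in> pt e}"
    proof -
      have "f v \<in> pt (f ` e) \<longleftrightarrow> v \<in> pt e" if "e \<in> X" for e
        using sub[OF that] inj v by (metis inj_on_image_mem_iff)
      then show ?thesis by blast
    qed
    moreover have "inj_on ?F {e\<in>X. v \<in> pt e}" by (rule inj_on_subset[OF injF]) (use sub in blast)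
    ultimately show ?thesis by (simp add: card_image)
  qed
  have "bal (?F ` X) \<longleftrightarrow> (\<forall>v\<in>?G. card {e'\<in>?F ` X. f v \<in> e'} = card {e'\<in>?F ` X. f v \<in> pt e'})"
    unfolding bal_def by (rule ball_onto[OF onto])
  also have "\<dots> \<longleftrightarrow> bal X" unfolding bal_def using k1 k2 by simp
  finally show ?thesis .
qed

lemma rot_inj: "inj_on rot (grid 3 3)"
  unfolding inj_on_def rot_def grid_def by auto

lemma rot_onto: "rot ` grid 3 3 = grid 3 3"
proof
  show "rot ` grid 3 3 \<subseteq> grid 3 3" unfolding rot_def grid_def by auto
  show "grid 3 3 \<subseteq> rot ` grid 3 3"
  proof
    fix x assume "x \<in> grid 3 3"
    then obtain a b where x: "x = (a,b)" "a \<in> {1..3}" "b \<in> {1..3}" unfolding grid_def by auto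
    then have "rot (4 - b, a) = x" "(4 - b, a) \<in> grid 3 3" unfolding rot_def grid_def by auto
    then show "x \<in> rot ` grid 3 3" by (metis image_eqI)
  qed
qed

lemma rot_comm: "p \<in> grid 3 3 \<Longrightarrow> q \<in> grid 3 3 \<Longrightarrow> p \<noteq> q \<Longrightarrow> pt {rot p, rot q} = rot ` pt {p,q}"
proof -
  assume a: "p \<in> grid 3 3" "q \<in> grid 3 3" "p \<noteq> q"
  then have "rot p \<noteq> rot q" using rot_inj unfolding inj_on_def by blast
  then show ?thesis using a by (simp add: pt_2 rot_def insert_commute)
qed

lemma rotate_graph_Suc: "rotate_graph (Suc r) B = (\<lambda>e. rot ` e) ` rotate_graph r B"
  unfolding rotate_graph_def by (simp add: image_image image_comp)

lemma rotate_bal: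
  assumes "dbl (grid 3 3) B" "bal B"
  shows "dbl (grid 3 3) (rotate_graph r B) \<and> bal (rotate_graph r B)"
proof (induction r)
  case 0
  then show ?case using assms by (simp add: rotate_graph_def)
next
  case (Suc r)
  then show ?case unfolding rotate_graph_Suc
    using bal_image[OF rot_inj rot_onto rot_comm] dbl_image[OF rot_inj] rot_onto by auto
qed

definition mapg :: "(nat \<Rightarrow> nat) \<Rightarrow> (nat \<Rightarrow> nat) \<Rightarrow> vtx \<Rightarrow> vtx" where
  "mapg \<pi> \<sigma> p = (\<pi> (fst p), \<sigma> (snd p))"

lemma mapg_inj:
  assumes "\<pi> permutes {1..3}" "\<sigma> permutes {1..3}"
  shows "inj (mapg \<pi> \<sigma>)"
proof (rule injI)
  fix x y assume "mapg \<pi> \<sigma> x = mapg \<pi> \<sigma> y"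
  then have "\<pi> (fst x) = \<pi> (fst y)" "\<sigma> (snd x) = \<sigma> (snd y)" by (simp_all add: mapg_def)
  then have "fst x = fst y" "snd x = snd y"
    using injD[OF permutes_inj[OF assms(1)]] injD[OF permutes_inj[OF assms(2)]] by blast+
  then show "x = y" by (simp add: prod_eq_iff)
qed

lemma mapg_onto:
  assumes "\<pi> permutes {1..3}" "\<sigma> permutes {1..3}"
  shows "mapg \<pi> \<sigma> ` grid 3 3 = grid 3 3"
proof
  show "mapg \<pi> \<sigma> ` grid 3 3 \<subseteq> grid 3 3"
  proof
    fix y assume "y \<in> mapg \<pi> \<sigma> ` grid 3 3"
    then obtain x where x: "x \<in> grid 3 3" "y = mapg \<pi> \<sigma> x" by blast
    then have "fst x \<in> {1..3}" "snd x \<in> {1..3}" unfolding grid_def by (auto simp only: mem_Times_iff)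
    then have "\<pi> (fst x) \<in> {1..3}" "\<sigma> (snd x) \<in> {1..3}"
      using permutes_in_image[OF assms(1)] permutes_in_image[OF assms(2)] by blast+
    then show "y \<in> grid 3 3" unfolding x(2) grid_def mapg_def by (simp only: mem_Times_iff fst_conv snd_conv)
  qed
  show "grid 3 3 \<subseteq> mapg \<pi> \<sigma> ` grid 3 3"
  proof
    fix x assume x: "x \<in> grid 3 3"
    then have x1: "fst x \<in> {1..3}" "snd x \<in> {1..3}" unfolding grid_def by (auto simp only: mem_Times_iff)
    let ?y = "(inv \<pi> (fst x), inv \<sigma> (snd x))"
    have "mapg \<pi> \<sigma> ?y = x" unfolding mapg_def
      using permutes_inverses(1)[OF assms(1)] permutes_inverses(1)[OF assms(2)] by simp
    moreover have "inv \<pi> (fst x) \<in> {1..3}" "inv \<sigma> (snd x) \<in> {1..3}"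
      using x1 permutes_in_image[OF permutes_inv[OF assms(1)]]
      permutes_in_image[OF permutes_inv[OF assms(2)]] by blast+
    then have "?y \<in> grid 3 3" unfolding grid_def by (simp only: mem_Times_iff fst_conv snd_conv)
    ultimately show "x \<in> mapg \<pi> \<sigma> ` grid 3 3" by (metis image_eqI)
  qed
qed

lemma mapg_comm: "p \<noteq> q \<Longrightarrow> mapg \<pi> \<sigma> p \<noteq> mapg \<pi> \<sigma> q \<Longrightarrow> pt {mapg \<pi> \<sigma> p, mapg \<pi> \<sigma> q} = mapg \<pi> \<sigma> ` pt {p,q}"
  by (simp add: pt_2 mapg_def)

lemma bal_mapg:
  assumes "\<pi> permutes {1..3}" "\<sigma> permutes {1..3}" "dbl (grid 3 3) X"
  shows "bal ((\<lambda>e. mapg \<pi> \<sigma> ` e) ` X) \<longleftrightarrow> bal X"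
proof (rule bal_image)
  show "inj_on (mapg \<pi> \<sigma>) (grid 3 3)" by (rule inj_on_subset[OF mapg_inj[OF assms(1,2)]]) simp
  show "mapg \<pi> \<sigma> ` grid 3 3 = grid 3 3" by (rule mapg_onto[OF assms(1,2)])
  show "pt {mapg \<pi> \<sigma> p, mapg \<pi> \<sigma> q} = mapg \<pi> \<sigma> ` pt {p, q}" if "p \<noteq> q" for p q
    using mapg_comm[OF that] injD[OF mapg_inj[OF assms(1,2)]] that by blast
qed (rule assms(3))

lemma loc_iso_image:
  assumes "locally_isomorphic 3 3 X H" "dbl (grid 3 3) X" "dbl (grid 3 3) H"
  shows "\<exists>\<pi> \<sigma>. \<pi> permutes {1..3} \<and> \<sigma> permutes {1..3} \<and> (\<lambda>e. mapg \<pi> \<sigma> ` e) ` X = H"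
proof -
  obtain \<pi> \<sigma> where p: "\<pi> permutes {1..3}" "\<sigma> permutes {1..3}" and
    iso: "\<forall>i\<in>{1..3}. \<forall>j\<in>{1..3}. \<forall>k\<in>{1..3}. \<forall>l\<in>{1..3}.
           {(i,j),(k,l)} \<in> X \<longleftrightarrow> {(\<pi> i, \<sigma> j),(\<pi> k, \<sigma> l)} \<in> H"
    using assms(1) unfolding locally_isomorphic_def by (elim exE conjE) (rule that)
  let ?g = "mapg \<pi> \<sigma>"
  have iso2: "{a,b} \<in> X \<longleftrightarrow> {?g a, ?g b} \<in> H" if "a \<in> grid 3 3" "b \<in> grid 3 3" for a b
  proof -
    obtain a1 a2 b1 b2 where ab: "a = (a1,a2)" "b = (b1,b2)" by fastforce
    with that have "a1 \<in> {1..3}" "a2 \<in> {1..3}" "b1 \<in> {1..3}" "b2 \<in> {1..3}"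
      unfolding grid_def by auto
    then show ?thesis using iso[rule_format, of a1 a2 b1 b2] unfolding ab mapg_def by simp
  qed
  have "(\<lambda>e. ?g ` e) ` X = H"
  proof
    show "(\<lambda>e. ?g ` e) ` X \<subseteq> H"
    proof
      fix e' assume "e' \<in> (\<lambda>e. ?g ` e) ` X"
      then obtain e where e: "e \<in> X" "e' = ?g ` e" by blast
      then obtain a b where ab: "a \<in> grid 3 3" "b \<in> grid 3 3" "e = {a,b}" using assms(2) unfolding dbl_def by blast
      have "e' = {?g a, ?g b}" using e ab by simp
      moreover have "{?g a, ?g b} \<in> H" using iso2[OF ab(1,2)] e(1) ab(3) by simp
      ultimately show "e' \<in> H" by simp
    qed
    show "H \<subseteq> (\<lambda>e. ?g ` e) ` X"
    proof
      fix e' assume "e' \<in> H"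
      then obtain a' b' where ab: "a' \<in> grid 3 3" "b' \<in> grid 3 3" "e' = {a',b'}" using assms(3) unfolding dbl_def by blast
      have "a' \<in> ?g ` grid 3 3" "b' \<in> ?g ` grid 3 3" using mapg_onto[OF p] ab by simp_all
      then obtain a b where "a \<in> grid 3 3" "b \<in> grid 3 3" "a' = ?g a" "b' = ?g b"
        by (elim imageE) blast
      then have "{a,b} \<in> X" "e' = ?g ` {a,b}" using iso2[of a b] ab \<open>e' \<in> H\<close> by simp_all
      then show "e' \<in> (\<lambda>e. ?g ` e) ` X" by blast
    qed
  qed
  then show ?thesis using p by blast
qed

lemma good_bal:
  assumes "grid_graph 3 3 X" "B \<in> {B2, B3, B4, B5}" "is_rotation H B" "locally_isomorphic 3 3 X H"
    and dB: "\<And>B. B \<in> {B2, B3, B4, B5} \<Longrightarrow> dbl (grid 3 3) B \<and> bal B"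
  shows "bal X"
proof -
  obtain r where H: "H = rotate_graph r B" using assms(3) unfolding is_rotation_def by blast
  have "dbl (grid 3 3) H \<and> bal H" using rotate_bal dB[OF assms(2)] H by blast
  moreover have dX: "dbl (grid 3 3) X" using assms(1) grid_graph_dbl by simp
  ultimately obtain \<pi> \<sigma> where "\<pi> permutes {1..3}" "\<sigma> permutes {1..3}" "(\<lambda>e. mapg \<pi> \<sigma> ` e) ` X = H"
    using loc_iso_image assms(4) by blast
  then show ?thesis using bal_mapg dX \<open>dbl (grid 3 3) H \<and> bal H\<close> by metis
qed

lemma good_block:
  assumes "\<pi> permutes {1..3}" "\<sigma> permutes {1..3}" "B \<in> {B2, B3, B4, B5}"
    and dB: "dbl (grid 3 3) B" "bal B"
  shows "grid_graph 3 3 ((\<lambda>e. mapg \<pi> \<sigma> ` e) ` rotate_graph r B) \<and>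
    (\<exists>B'\<in>{B2, B3, B4, B5}. \<exists>H. is_rotation H B' \<and>
       locally_isomorphic 3 3 ((\<lambda>e. mapg \<pi> \<sigma> ` e) ` rotate_graph r B) H)"
proof -
  let ?H = "rotate_graph r B"
  let ?X = "(\<lambda>e. mapg \<pi> \<sigma> ` e) ` ?H"
  have dH: "dbl (grid 3 3) ?H" using rotate_bal dB by blast
  have dX: "dbl (grid 3 3) ?X"
  proof (rule dbl_image[OF _ _ dH])
    show "inj_on (mapg \<pi> \<sigma>) (grid 3 3)" by (rule inj_on_subset[OF mapg_inj[OF assms(1,2)]]) simp
    show "mapg \<pi> \<sigma> ` grid 3 3 \<subseteq> grid 3 3" using mapg_onto[OF assms(1,2)] by simp
  qed
  have injI: "inj (\<lambda>e. mapg \<pi> \<sigma> ` e)" using inj_on_image_Pow[of "mapg \<pi> \<sigma>" UNIV] mapg_inj[OF assms(1,2)] by simp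
  have "locally_isomorphic 3 3 ?X ?H"
    unfolding locally_isomorphic_def
  proof (intro exI conjI ballI)
    show "inv \<pi> permutes {1..3}" "inv \<sigma> permutes {1..3}" using permutes_inv assms(1,2) by auto
    fix i j k l
    have eq: "{(i,j),(k,l)} = mapg \<pi> \<sigma> ` {(inv \<pi> i, inv \<sigma> j),(inv \<pi> k, inv \<sigma> l)}"
      unfolding mapg_def using permutes_inverses(1)[OF assms(1)] permutes_inverses(1)[OF assms(2)] by simp
    then show "{(i,j),(k,l)} \<in> ?X \<longleftrightarrow> {(inv \<pi> i, inv \<sigma> j),(inv \<pi> k, inv \<sigma> l)} \<in> ?H"
      by (simp only: eq inj_image_mem_iff[OF injI])
  qed
  then show ?thesis using dX grid_graph_dbl assms(3) unfolding is_rotation_def by blast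
qed



definition Dl :: "vtx set list" where
  "Dl = [{(1,1),(2,2)}, {(1,1),(2,3)}, {(1,1),(3,2)}, {(1,1),(3,3)}, {(1,2),(2,1)}, {(1,2),(2,3)}, {(1,2),(3,1)}, {(1,2),(3,3)}, {(1,3),(2,1)}, {(1,3),(2,2)}, {(1,3),(3,1)}, {(1,3),(3,2)}, {(2,1),(3,2)}, {(2,1),(3,3)}, {(2,2),(3,1)}, {(2,2),(3,3)}, {(2,3),(3,1)}, {(2,3),(3,2)}]"
lemma Dl_len: "length Dl = 18" by (simp add: Dl_def)
lemma Dl_distinct: "distinct Dl" by (simp add: Dl_def doubleton_eq_iff)

definition inE :: "vtx set set \<Rightarrow> nat \<Rightarrow> bool" where "inE E k \<longleftrightarrow> Dl ! k \<in> E"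

lemma bridge:
  assumes "E \<subseteq> set Dl"
  shows "int (card {e\<in>E. P e}) = (\<Sum>k\<leftarrow>[0..<18]. if P (Dl!k) \<and> inE E k then 1 else 0)"
proof -
  let ?S = "{k\<in>{0..<18}. P (Dl!k) \<and> inE E k}"
  have "{e\<in>E. P e} = (!) Dl ` ?S"
  proof
    show "{e\<in>E. P e} \<subseteq> (!) Dl ` ?S"
    proof
      fix e assume "e \<in> {e\<in>E. P e}"
      then have "e \<in> set Dl" "P e" "e \<in> E" using assms by auto
      then obtain k where "k < length Dl" "Dl!k = e" by (metis in_set_conv_nth)
      then show "e \<in> (!) Dl ` ?S" using \<open>P e\<close> \<open>e\<in>E\<close> Dl_len unfolding inE_def by force
    qed
    show "(!) Dl ` ?S \<subseteq> {e\<in>E. P e}" unfolding inE_def by auto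
  qed
  moreover have "inj_on ((!) Dl) ?S" using Dl_distinct Dl_len by (auto simp: inj_on_def nth_eq_iff_index_eq)
  ultimately have "card {e\<in>E. P e} = card ?S" by (simp add: card_image)
  moreover have "int (card ?S) = (\<Sum>k\<in>?S. 1)" by simp
  moreover have "(\<Sum>k\<in>?S. (1::int)) = (\<Sum>k\<in>{0..<18}. if P (Dl!k) \<and> inE E k then 1 else 0)"
    by (rule sum.inter_filter) simp
  moreover have "(\<Sum>k\<in>{0..<18}. if P (Dl!k) \<and> inE E k then 1 else (0::int)) = (\<Sum>k\<leftarrow>[0..<18]. if P (Dl!k) \<and> inE E k then 1 else 0)"
    using sum_set_upt_conv_sum_list_nat[of _ 0 18] by simp
  ultimately show ?thesis by simp
qed

lemma dbl_empty: "dbl S {}" unfolding dbl_def by simp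
lemma dbl_insert: "p \<in> S \<Longrightarrow> q \<in> S \<Longrightarrow> p \<noteq> q \<Longrightarrow> dbl S E \<Longrightarrow> dbl S (insert {p,q} E)"
  unfolding dbl_def by blast
lemma dbl_mono: "dbl S E \<Longrightarrow> F \<subseteq> E \<Longrightarrow> dbl S F"
  unfolding dbl_def by blast
lemma dbl_Dl: "dbl (grid 3 3) (set Dl)"
  unfolding Dl_def list.set by (intro dbl_insert dbl_empty) (simp_all add: grid_def)

lemma upt18: "[0..<18] = [0,1,2,3,4,5,6,7,8,9,10,11,12,13,14,15,16,17::nat]"
  by (simp add: upt_rec)

lemma ball_grid: "(\<forall>v\<in>grid 3 3. P v) \<longleftrightarrow> P (1,1) \<and> P (1,2) \<and> P (1,3) \<and> P (2,1) \<and> P (2,2) \<and> P (2,3) \<and> P (3,1) \<and> P (3,2) \<and> P (3,3)"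
proof -
  have e: "{1..3::nat} = {1,2,3}" by auto
  show ?thesis unfolding grid_def e by simp
qed

lemma bal_eqs:
  assumes "E \<subseteq> set Dl"
  shows "bal E \<longleftrightarrow> ((if inE E 0 then 1 else 0) + ((if inE E 1 then 1 else 0) + ((if inE E 2 then 1 else 0) + ((if inE E 3 then 1 else 0)))) = ((if inE E 4 then 1 else 0) + ((if inE E 6 then 1 else 0) + ((if inE E 8 then 1 else 0) + ((if inE E 10 then 1 else 0))))::int))
    \<and> ((if inE E 4 then 1 else 0) + ((if inE E 5 then 1 else 0) + ((if inE E 6 then 1 else 0) + ((if inE E 7 then 1 else 0)))) = ((if inE E 0 then 1 else 0) + ((if inE E 2 then 1 else 0) + ((if inE E 9 then 1 else 0) + ((if inE E 11 then 1 else 0))))::int))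
    \<and> ((if inE E 8 then 1 else 0) + ((if inE E 9 then 1 else 0) + ((if inE E 10 then 1 else 0) + ((if inE E 11 then 1 else 0)))) = ((if inE E 1 then 1 else 0) + ((if inE E 3 then 1 else 0) + ((if inE E 5 then 1 else 0) + ((if inE E 7 then 1 else 0))))::int))
    \<and> ((if inE E 4 then 1 else 0) + ((if inE E 8 then 1 else 0) + ((if inE E 12 then 1 else 0) + ((if inE E 13 then 1 else 0)))) = ((if inE E 0 then 1 else 0) + ((if inE E 1 then 1 else 0) + ((if inE E 14 then 1 else 0) + ((if inE E 16 then 1 else 0))))::int))
    \<and> ((if inE E 0 then 1 else 0) + ((if inE E 9 then 1 else 0) + ((if inE E 14 then 1 else 0) + ((if inE E 15 then 1 else 0)))) = ((if inE E 4 then 1 else 0) + ((if inE E 5 then 1 else 0) + ((if inE E 12 then 1 else 0) + ((if inE E 17 then 1 else 0))))::int))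
    \<and> ((if inE E 1 then 1 else 0) + ((if inE E 5 then 1 else 0) + ((if inE E 16 then 1 else 0) + ((if inE E 17 then 1 else 0)))) = ((if inE E 8 then 1 else 0) + ((if inE E 9 then 1 else 0) + ((if inE E 13 then 1 else 0) + ((if inE E 15 then 1 else 0))))::int))
    \<and> ((if inE E 6 then 1 else 0) + ((if inE E 10 then 1 else 0) + ((if inE E 14 then 1 else 0) + ((if inE E 16 then 1 else 0)))) = ((if inE E 2 then 1 else 0) + ((if inE E 3 then 1 else 0) + ((if inE E 12 then 1 else 0) + ((if inE E 13 then 1 else 0))))::int))
    \<and> ((if inE E 2 then 1 else 0) + ((if inE E 11 then 1 else 0) + ((if inE E 12 then 1 else 0) + ((if inE E 17 then 1 else 0)))) = ((if inE E 6 then 1 else 0) + ((if inE E 7 then 1 else 0) + ((if inE E 14 then 1 else 0) + ((if inE E 15 then 1 else 0))))::int))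
    \<and> ((if inE E 3 then 1 else 0) + ((if inE E 7 then 1 else 0) + ((if inE E 13 then 1 else 0) + ((if inE E 15 then 1 else 0)))) = ((if inE E 10 then 1 else 0) + ((if inE E 11 then 1 else 0) + ((if inE E 16 then 1 else 0) + ((if inE E 17 then 1 else 0))))::int))"
proof -
  have "bal E \<longleftrightarrow> (\<forall>v\<in>grid 3 3. int (card {e\<in>E. v \<in> e}) = int (card {e\<in>E. v \<in> pt e}))"
    unfolding bal_def by simp
  also have "\<dots> \<longleftrightarrow> (\<forall>v\<in>grid 3 3. (\<Sum>k\<leftarrow>[0..<18]. if v \<in> Dl!k \<and> inE E k then 1 else 0) = (\<Sum>k\<leftarrow>[0..<18]. if v \<in> pt (Dl!k) \<and> inE E k then 1 else (0::int)))"
    unfolding bridge[OF assms] ..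
  also have "\<dots> \<longleftrightarrow> ((if inE E 0 then 1 else 0) + ((if inE E 1 then 1 else 0) + ((if inE E 2 then 1 else 0) + ((if inE E 3 then 1 else 0)))) = ((if inE E 4 then 1 else 0) + ((if inE E 6 then 1 else 0) + ((if inE E 8 then 1 else 0) + ((if inE E 10 then 1 else 0))))::int))
    \<and> ((if inE E 4 then 1 else 0) + ((if inE E 5 then 1 else 0) + ((if inE E 6 then 1 else 0) + ((if inE E 7 then 1 else 0)))) = ((if inE E 0 then 1 else 0) + ((if inE E 2 then 1 else 0) + ((if inE E 9 then 1 else 0) + ((if inE E 11 then 1 else 0))))::int))
    \<and> ((if inE E 8 then 1 else 0) + ((if inE E 9 then 1 else 0) + ((if inE E 10 then 1 else 0) + ((if inE E 11 then 1 else 0)))) = ((if inE E 1 then 1 else 0) + ((if inE E 3 then 1 else 0) + ((if inE E 5 then 1 else 0) + ((if inE E 7 then 1 else 0))))::int))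
    \<and> ((if inE E 4 then 1 else 0) + ((if inE E 8 then 1 else 0) + ((if inE E 12 then 1 else 0) + ((if inE E 13 then 1 else 0)))) = ((if inE E 0 then 1 else 0) + ((if inE E 1 then 1 else 0) + ((if inE E 14 then 1 else 0) + ((if inE E 16 then 1 else 0))))::int))
    \<and> ((if inE E 0 then 1 else 0) + ((if inE E 9 then 1 else 0) + ((if inE E 14 then 1 else 0) + ((if inE E 15 then 1 else 0)))) = ((if inE E 4 then 1 else 0) + ((if inE E 5 then 1 else 0) + ((if inE E 12 then 1 else 0) + ((if inE E 17 then 1 else 0))))::int))
    \<and> ((if inE E 1 then 1 else 0) + ((if inE E 5 then 1 else 0) + ((if inE E 16 then 1 else 0) + ((if inE E 17 then 1 else 0)))) = ((if inE E 8 then 1 else 0) + ((if inE E 9 then 1 else 0) + ((if inE E 13 then 1 else 0) + ((if inE E 15 then 1 else 0))))::int))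
    \<and> ((if inE E 6 then 1 else 0) + ((if inE E 10 then 1 else 0) + ((if inE E 14 then 1 else 0) + ((if inE E 16 then 1 else 0)))) = ((if inE E 2 then 1 else 0) + ((if inE E 3 then 1 else 0) + ((if inE E 12 then 1 else 0) + ((if inE E 13 then 1 else 0))))::int))
    \<and> ((if inE E 2 then 1 else 0) + ((if inE E 11 then 1 else 0) + ((if inE E 12 then 1 else 0) + ((if inE E 17 then 1 else 0)))) = ((if inE E 6 then 1 else 0) + ((if inE E 7 then 1 else 0) + ((if inE E 14 then 1 else 0) + ((if inE E 15 then 1 else 0))))::int))
    \<and> ((if inE E 3 then 1 else 0) + ((if inE E 7 then 1 else 0) + ((if inE E 13 then 1 else 0) + ((if inE E 15 then 1 else 0)))) = ((if inE E 10 then 1 else 0) + ((if inE E 11 then 1 else 0) + ((if inE E 16 then 1 else 0) + ((if inE E 17 then 1 else 0))))::int))"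
    unfolding ball_grid upt18 by (simp add: Dl_def pt_2 split del: if_split)
  finally show ?thesis .
qed

lemma B2_sub: "B2 \<subseteq> set Dl" by (simp add: B2_def Dl_def doubleton_eq_iff)
lemma B2_dbl: "dbl (grid 3 3) B2" by (rule dbl_mono[OF dbl_Dl B2_sub])
lemma B2_bal: "bal B2" unfolding bal_eqs[OF B2_sub] by (simp add: inE_def Dl_def B2_def doubleton_eq_iff)

lemma B3_sub: "B3 \<subseteq> set Dl" by (simp add: B3_def Dl_def doubleton_eq_iff)
lemma B3_dbl: "dbl (grid 3 3) B3" by (rule dbl_mono[OF dbl_Dl B3_sub])
lemma B3_bal: "bal B3" unfolding bal_eqs[OF B3_sub] by (simp add: inE_def Dl_def B3_def doubleton_eq_iff)

lemma B4_sub: "B4 \<subseteq> set Dl" by (simp add: B4_def Dl_def doubleton_eq_iff)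
lemma B4_dbl: "dbl (grid 3 3) B4" by (rule dbl_mono[OF dbl_Dl B4_sub])
lemma B4_bal: "bal B4" unfolding bal_eqs[OF B4_sub] by (simp add: inE_def Dl_def B4_def doubleton_eq_iff)

lemma B5_sub: "B5 \<subseteq> set Dl" by (simp add: B5_def Dl_def doubleton_eq_iff)
lemma B5_dbl: "dbl (grid 3 3) B5" by (rule dbl_mono[OF dbl_Dl B5_sub])
lemma B5_bal: "bal B5" unfolding bal_eqs[OF B5_sub] by (simp add: inE_def Dl_def B5_def doubleton_eq_iff)




definition Blocks :: "nat list list" where
  "Blocks = [[0,4], [2,6], [1,8], [0,5,8], [1,4,9], [5,9], [3,10], [2,7,10], [3,6,11], [7,11], [0,6,12], [1,6,9,12], [0,7,10,12], [1,7,9,10,12], [1,10,13], [0,5,10,13], [1,6,11,13], [0,5,6,11,13], [2,4,14], [2,5,8,14], [3,4,11,14], [3,5,8,11,14], [12,14], [2,5,10,13,14], [1,4,11,13,14], [5,11,13,14], [1,2,4,10,15], [2,5,10,15], [1,4,11,15], [5,11,15], [1,10,12,15], [0,5,10,12,15], [1,6,11,12,15], [3,8,16], [2,7,8,16], [3,4,9,16], [2,4,7,9,16], [0,7,8,12,16], [3,6,9,12,16], [7,9,12,16], [13,16], [2,4,15,16], [2,5,8,15,16], [3,4,11,15,16], [12,15,16], [0,3,6,8,17], [0,7,8,17], [3,6,9,17], [7,9,17], [0,6,13,17], [1,6,9,13,17], [0,7,10,13,17], [3,8,14,17], [2,7,8,14,17], [3,4,9,14,17], [13,14,17], [15,17]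]"

lemma corez:
  fixes z0 z1 z2 z3 z4 z5 z6 z7 z8 :: int
  assumes "z0 + z1 + z3 + z4 = 0"
    and "- z0 + z2 - z3 + z5 = 0"
    and "- z1 - z2 - z4 - z5 = 0"
    and "- z0 - z1 + z6 + z7 = 0"
    and "z0 - z2 - z6 + z8 = 0"
    and "z1 + z2 - z7 - z8 = 0"
    and "- z3 - z4 - z6 - z7 = 0"
    and "z3 - z5 + z6 - z8 = 0"
    and "z4 + z5 + z7 + z8 = 0"
    and "-1 \<le> z0 \<and> z0 \<le> 1 \<and> -1 \<le> z1 \<and> z1 \<le> 1 \<and> -1 \<le> z2 \<and> z2 \<le> 1 \<and> -1 \<le> z3 \<and> z3 \<le> 1 \<and> -1 \<le> z4 \<and> z4 \<le> 1 \<and> -1 \<le> z5 \<and> z5 \<le> 1 \<and> -1 \<le> z6 \<and> z6 \<le> 1 \<and> -1 \<le> z7 \<and> z7 \<le> 1 \<and> -1 \<le> z8 \<and> z8 \<le> 1"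
    and "z0 \<noteq> 0 \<or> z1 \<noteq> 0 \<or> z2 \<noteq> 0 \<or> z3 \<noteq> 0 \<or> z4 \<noteq> 0 \<or> z5 \<noteq> 0 \<or> z6 \<noteq> 0 \<or> z7 \<noteq> 0 \<or> z8 \<noteq> 0"
  shows "(z0 = 1 \<and> z1 = -1 \<and> z2 = 1)
    \<or> (z0 = -1 \<and> z1 = 1 \<and> z2 = -1)
    \<or> (z3 = 1 \<and> z4 = -1 \<and> z5 = 1)
    \<or> (z3 = -1 \<and> z4 = 1 \<and> z5 = -1)
    \<or> (z0 = 1 \<and> z3 = -1 \<and> z6 = 1)
    \<or> (z1 = 1 \<and> z2 = -1 \<and> z3 = -1 \<and> z6 = 1)
    \<or> (z0 = 1 \<and> z4 = -1 \<and> z5 = 1 \<and> z6 = 1)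
    \<or> (z1 = 1 \<and> z2 = -1 \<and> z4 = -1 \<and> z5 = 1 \<and> z6 = 1)
    \<or> (z1 = 1 \<and> z4 = -1 \<and> z7 = 1)
    \<or> (z0 = 1 \<and> z2 = 1 \<and> z4 = -1 \<and> z7 = 1)
    \<or> (z1 = 1 \<and> z3 = -1 \<and> z5 = -1 \<and> z7 = 1)
    \<or> (z0 = 1 \<and> z2 = 1 \<and> z3 = -1 \<and> z5 = -1 \<and> z7 = 1)
    \<or> (z0 = -1 \<and> z3 = 1 \<and> z6 = -1)
    \<or> (z1 = -1 \<and> z2 = 1 \<and> z3 = 1 \<and> z6 = -1)
    \<or> (z0 = -1 \<and> z4 = 1 \<and> z5 = -1 \<and> z6 = -1)
    \<or> (z1 = -1 \<and> z2 = 1 \<and> z4 = 1 \<and> z5 = -1 \<and> z6 = -1)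
    \<or> (z2 = 1 \<and> z3 = 1 \<and> z4 = -1 \<and> z6 = -1 \<and> z7 = 1)
    \<or> (z0 = -1 \<and> z1 = 1 \<and> z5 = -1 \<and> z6 = -1 \<and> z7 = 1)
    \<or> (z2 = 1 \<and> z5 = -1 \<and> z6 = -1 \<and> z7 = 1)
    \<or> (z0 = -1 \<and> z1 = 1 \<and> z3 = 1 \<and> z4 = -1 \<and> z8 = 1)
    \<or> (z2 = 1 \<and> z3 = 1 \<and> z4 = -1 \<and> z8 = 1)
    \<or> (z0 = -1 \<and> z1 = 1 \<and> z5 = -1 \<and> z8 = 1)
    \<or> (z2 = 1 \<and> z5 = -1 \<and> z8 = 1)
    \<or> (z1 = 1 \<and> z4 = -1 \<and> z6 = 1 \<and> z8 = 1)
    \<or> (z0 = 1 \<and> z2 = 1 \<and> z4 = -1 \<and> z6 = 1 \<and> z8 = 1)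
    \<or> (z1 = 1 \<and> z3 = -1 \<and> z5 = -1 \<and> z6 = 1 \<and> z8 = 1)
    \<or> (z1 = -1 \<and> z4 = 1 \<and> z7 = -1)
    \<or> (z1 = -1 \<and> z3 = 1 \<and> z5 = 1 \<and> z7 = -1)
    \<or> (z0 = -1 \<and> z2 = -1 \<and> z4 = 1 \<and> z7 = -1)
    \<or> (z0 = -1 \<and> z2 = -1 \<and> z3 = 1 \<and> z5 = 1 \<and> z7 = -1)
    \<or> (z0 = 1 \<and> z1 = -1 \<and> z5 = 1 \<and> z6 = 1 \<and> z7 = -1)
    \<or> (z2 = -1 \<and> z3 = -1 \<and> z4 = 1 \<and> z6 = 1 \<and> z7 = -1)
    \<or> (z2 = -1 \<and> z5 = 1 \<and> z6 = 1 \<and> z7 = -1)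
    \<or> (z0 = -1 \<and> z3 = 1 \<and> z7 = -1 \<and> z8 = 1)
    \<or> (z1 = -1 \<and> z2 = 1 \<and> z3 = 1 \<and> z7 = -1 \<and> z8 = 1)
    \<or> (z0 = -1 \<and> z4 = 1 \<and> z5 = -1 \<and> z7 = -1 \<and> z8 = 1)
    \<or> (z6 = 1 \<and> z7 = -1 \<and> z8 = 1)
    \<or> (z0 = 1 \<and> z1 = -1 \<and> z3 = -1 \<and> z4 = 1 \<and> z8 = -1)
    \<or> (z0 = 1 \<and> z1 = -1 \<and> z5 = 1 \<and> z8 = -1)
    \<or> (z2 = -1 \<and> z3 = -1 \<and> z4 = 1 \<and> z8 = -1)
    \<or> (z2 = -1 \<and> z5 = 1 \<and> z8 = -1)
    \<or> (z0 = 1 \<and> z3 = -1 \<and> z7 = 1 \<and> z8 = -1)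
    \<or> (z1 = 1 \<and> z2 = -1 \<and> z3 = -1 \<and> z7 = 1 \<and> z8 = -1)
    \<or> (z0 = 1 \<and> z4 = -1 \<and> z5 = 1 \<and> z7 = 1 \<and> z8 = -1)
    \<or> (z1 = -1 \<and> z4 = 1 \<and> z6 = -1 \<and> z8 = -1)
    \<or> (z1 = -1 \<and> z3 = 1 \<and> z5 = 1 \<and> z6 = -1 \<and> z8 = -1)
    \<or> (z0 = -1 \<and> z2 = -1 \<and> z4 = 1 \<and> z6 = -1 \<and> z8 = -1)
    \<or> (z6 = -1 \<and> z7 = 1 \<and> z8 = -1)"
  using assms by (smt (z3))

lemma core_b:
  fixes b :: "nat \<Rightarrow> bool"
  assumes eqs: "((if b 0 then 1 else 0) + ((if b 1 then 1 else 0) + ((if b 2 then 1 else 0) + ((if b 3 then 1 else 0)))) = ((if b 4 then 1 else 0) + ((if b 6 then 1 else 0) + ((if b 8 then 1 else 0) + ((if b 10 then 1 else 0))))::int))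
    \<and> ((if b 4 then 1 else 0) + ((if b 5 then 1 else 0) + ((if b 6 then 1 else 0) + ((if b 7 then 1 else 0)))) = ((if b 0 then 1 else 0) + ((if b 2 then 1 else 0) + ((if b 9 then 1 else 0) + ((if b 11 then 1 else 0))))::int))
    \<and> ((if b 8 then 1 else 0) + ((if b 9 then 1 else 0) + ((if b 10 then 1 else 0) + ((if b 11 then 1 else 0)))) = ((if b 1 then 1 else 0) + ((if b 3 then 1 else 0) + ((if b 5 then 1 else 0) + ((if b 7 then 1 else 0))))::int))
    \<and> ((if b 4 then 1 else 0) + ((if b 8 then 1 else 0) + ((if b 12 then 1 else 0) + ((if b 13 then 1 else 0)))) = ((if b 0 then 1 else 0) + ((if b 1 then 1 else 0) + ((if b 14 then 1 else 0) + ((if b 16 then 1 else 0))))::int))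
    \<and> ((if b 0 then 1 else 0) + ((if b 9 then 1 else 0) + ((if b 14 then 1 else 0) + ((if b 15 then 1 else 0)))) = ((if b 4 then 1 else 0) + ((if b 5 then 1 else 0) + ((if b 12 then 1 else 0) + ((if b 17 then 1 else 0))))::int))
    \<and> ((if b 1 then 1 else 0) + ((if b 5 then 1 else 0) + ((if b 16 then 1 else 0) + ((if b 17 then 1 else 0)))) = ((if b 8 then 1 else 0) + ((if b 9 then 1 else 0) + ((if b 13 then 1 else 0) + ((if b 15 then 1 else 0))))::int))
    \<and> ((if b 6 then 1 else 0) + ((if b 10 then 1 else 0) + ((if b 14 then 1 else 0) + ((if b 16 then 1 else 0)))) = ((if b 2 then 1 else 0) + ((if b 3 then 1 else 0) + ((if b 12 then 1 else 0) + ((if b 13 then 1 else 0))))::int))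
    \<and> ((if b 2 then 1 else 0) + ((if b 11 then 1 else 0) + ((if b 12 then 1 else 0) + ((if b 17 then 1 else 0)))) = ((if b 6 then 1 else 0) + ((if b 7 then 1 else 0) + ((if b 14 then 1 else 0) + ((if b 15 then 1 else 0))))::int))
    \<and> ((if b 3 then 1 else 0) + ((if b 7 then 1 else 0) + ((if b 13 then 1 else 0) + ((if b 15 then 1 else 0)))) = ((if b 10 then 1 else 0) + ((if b 11 then 1 else 0) + ((if b 16 then 1 else 0) + ((if b 17 then 1 else 0))))::int))"
    and ne: "\<exists>k<18. b k"
  shows "\<exists>ks\<in>set Blocks. \<forall>k\<in>set ks. b k"
proof -
  have ne': "b 0 \<or> b 1 \<or> b 2 \<or> b 3 \<or> b 4 \<or> b 5 \<or> b 6 \<or> b 7 \<or> b 8 \<or> b 9 \<or> b 10 \<or> b 11 \<or> b 12 \<or> b 13 \<or> b 14 \<or> b 15 \<or> b 16 \<or> b 17"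
  proof -
    obtain k where k: "k < 18" "b k" using ne by blast
    then have "k \<in> set [0..<18]" by simp
    then show ?thesis unfolding upt18 using k(2) by auto
  qed
  show ?thesis
  proof (cases "(b 0 \<and> b 4) \<or> (b 1 \<and> b 8) \<or> (b 5 \<and> b 9) \<or> (b 2 \<and> b 6) \<or> (b 3 \<and> b 10) \<or> (b 7 \<and> b 11) \<or> (b 12 \<and> b 14) \<or> (b 13 \<and> b 16) \<or> (b 15 \<and> b 17)")
    case True
    then show ?thesis by (auto simp: Blocks_def)
  next
    case False
    define z0 :: int where "z0 = (if b 0 then 1 else 0) - (if b 4 then 1 else 0)"
    define z1 :: int where "z1 = (if b 1 then 1 else 0) - (if b 8 then 1 else 0)"
    define z2 :: int where "z2 = (if b 5 then 1 else 0) - (if b 9 then 1 else 0)"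
    define z3 :: int where "z3 = (if b 2 then 1 else 0) - (if b 6 then 1 else 0)"
    define z4 :: int where "z4 = (if b 3 then 1 else 0) - (if b 10 then 1 else 0)"
    define z5 :: int where "z5 = (if b 7 then 1 else 0) - (if b 11 then 1 else 0)"
    define z6 :: int where "z6 = (if b 12 then 1 else 0) - (if b 14 then 1 else 0)"
    define z7 :: int where "z7 = (if b 13 then 1 else 0) - (if b 16 then 1 else 0)"
    define z8 :: int where "z8 = (if b 15 then 1 else 0) - (if b 17 then 1 else 0)"
    have zb: "b 0 = (z0 = 1)" "b 4 = (z0 = -1)" "b 1 = (z1 = 1)" "b 8 = (z1 = -1)" "b 5 = (z2 = 1)" "b 9 = (z2 = -1)" "b 2 = (z3 = 1)" "b 6 = (z3 = -1)" "b 3 = (z4 = 1)" "b 10 = (z4 = -1)" "b 7 = (z5 = 1)" "b 11 = (z5 = -1)" "b 12 = (z6 = 1)" "b 14 = (z6 = -1)" "b 13 = (z7 = 1)" "b 16 = (z7 = -1)" "b 15 = (z8 = 1)" "b 17 = (z8 = -1)"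
      using False unfolding z0_def z1_def z2_def z3_def z4_def z5_def z6_def z7_def z8_def by auto
    have bnd: "-1 \<le> z0 \<and> z0 \<le> 1 \<and> -1 \<le> z1 \<and> z1 \<le> 1 \<and> -1 \<le> z2 \<and> z2 \<le> 1 \<and> -1 \<le> z3 \<and> z3 \<le> 1 \<and> -1 \<le> z4 \<and> z4 \<le> 1 \<and> -1 \<le> z5 \<and> z5 \<le> 1 \<and> -1 \<le> z6 \<and> z6 \<le> 1 \<and> -1 \<le> z7 \<and> z7 \<le> 1 \<and> -1 \<le> z8 \<and> z8 \<le> 1"
      unfolding z0_def z1_def z2_def z3_def z4_def z5_def z6_def z7_def z8_def by simp
    have ze0: "z0 + z1 + z3 + z4 = 0" using eqs unfolding z0_def z1_def z2_def z3_def z4_def z5_def z6_def z7_def z8_def by linarith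
    have ze1: "- z0 + z2 - z3 + z5 = 0" using eqs unfolding z0_def z1_def z2_def z3_def z4_def z5_def z6_def z7_def z8_def by linarith
    have ze2: "- z1 - z2 - z4 - z5 = 0" using eqs unfolding z0_def z1_def z2_def z3_def z4_def z5_def z6_def z7_def z8_def by linarith
    have ze3: "- z0 - z1 + z6 + z7 = 0" using eqs unfolding z0_def z1_def z2_def z3_def z4_def z5_def z6_def z7_def z8_def by linarith
    have ze4: "z0 - z2 - z6 + z8 = 0" using eqs unfolding z0_def z1_def z2_def z3_def z4_def z5_def z6_def z7_def z8_def by linarith
    have ze5: "z1 + z2 - z7 - z8 = 0" using eqs unfolding z0_def z1_def z2_def z3_def z4_def z5_def z6_def z7_def z8_def by linarith
    have ze6: "- z3 - z4 - z6 - z7 = 0" using eqs unfolding z0_def z1_def z2_def z3_def z4_def z5_def z6_def z7_def z8_def by linarith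
    have ze7: "z3 - z5 + z6 - z8 = 0" using eqs unfolding z0_def z1_def z2_def z3_def z4_def z5_def z6_def z7_def z8_def by linarith
    have ze8: "z4 + z5 + z7 + z8 = 0" using eqs unfolding z0_def z1_def z2_def z3_def z4_def z5_def z6_def z7_def z8_def by linarith
    have nz: "z0 \<noteq> 0 \<or> z1 \<noteq> 0 \<or> z2 \<noteq> 0 \<or> z3 \<noteq> 0 \<or> z4 \<noteq> 0 \<or> z5 \<noteq> 0 \<or> z6 \<noteq> 0 \<or> z7 \<noteq> 0 \<or> z8 \<noteq> 0" using ne' unfolding zb by auto
    have zd: "(z0 = 1 \<and> z1 = -1 \<and> z2 = 1)
    \<or> (z0 = -1 \<and> z1 = 1 \<and> z2 = -1)
    \<or> (z3 = 1 \<and> z4 = -1 \<and> z5 = 1)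
    \<or> (z3 = -1 \<and> z4 = 1 \<and> z5 = -1)
    \<or> (z0 = 1 \<and> z3 = -1 \<and> z6 = 1)
    \<or> (z1 = 1 \<and> z2 = -1 \<and> z3 = -1 \<and> z6 = 1)
    \<or> (z0 = 1 \<and> z4 = -1 \<and> z5 = 1 \<and> z6 = 1)
    \<or> (z1 = 1 \<and> z2 = -1 \<and> z4 = -1 \<and> z5 = 1 \<and> z6 = 1)
    \<or> (z1 = 1 \<and> z4 = -1 \<and> z7 = 1)
    \<or> (z0 = 1 \<and> z2 = 1 \<and> z4 = -1 \<and> z7 = 1)
    \<or> (z1 = 1 \<and> z3 = -1 \<and> z5 = -1 \<and> z7 = 1)
    \<or> (z0 = 1 \<and> z2 = 1 \<and> z3 = -1 \<and> z5 = -1 \<and> z7 = 1)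
    \<or> (z0 = -1 \<and> z3 = 1 \<and> z6 = -1)
    \<or> (z1 = -1 \<and> z2 = 1 \<and> z3 = 1 \<and> z6 = -1)
    \<or> (z0 = -1 \<and> z4 = 1 \<and> z5 = -1 \<and> z6 = -1)
    \<or> (z1 = -1 \<and> z2 = 1 \<and> z4 = 1 \<and> z5 = -1 \<and> z6 = -1)
    \<or> (z2 = 1 \<and> z3 = 1 \<and> z4 = -1 \<and> z6 = -1 \<and> z7 = 1)
    \<or> (z0 = -1 \<and> z1 = 1 \<and> z5 = -1 \<and> z6 = -1 \<and> z7 = 1)
    \<or> (z2 = 1 \<and> z5 = -1 \<and> z6 = -1 \<and> z7 = 1)
    \<or> (z0 = -1 \<and> z1 = 1 \<and> z3 = 1 \<and> z4 = -1 \<and> z8 = 1)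
    \<or> (z2 = 1 \<and> z3 = 1 \<and> z4 = -1 \<and> z8 = 1)
    \<or> (z0 = -1 \<and> z1 = 1 \<and> z5 = -1 \<and> z8 = 1)
    \<or> (z2 = 1 \<and> z5 = -1 \<and> z8 = 1)
    \<or> (z1 = 1 \<and> z4 = -1 \<and> z6 = 1 \<and> z8 = 1)
    \<or> (z0 = 1 \<and> z2 = 1 \<and> z4 = -1 \<and> z6 = 1 \<and> z8 = 1)
    \<or> (z1 = 1 \<and> z3 = -1 \<and> z5 = -1 \<and> z6 = 1 \<and> z8 = 1)
    \<or> (z1 = -1 \<and> z4 = 1 \<and> z7 = -1)
    \<or> (z1 = -1 \<and> z3 = 1 \<and> z5 = 1 \<and> z7 = -1)
    \<or> (z0 = -1 \<and> z2 = -1 \<and> z4 = 1 \<and> z7 = -1)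
    \<or> (z0 = -1 \<and> z2 = -1 \<and> z3 = 1 \<and> z5 = 1 \<and> z7 = -1)
    \<or> (z0 = 1 \<and> z1 = -1 \<and> z5 = 1 \<and> z6 = 1 \<and> z7 = -1)
    \<or> (z2 = -1 \<and> z3 = -1 \<and> z4 = 1 \<and> z6 = 1 \<and> z7 = -1)
    \<or> (z2 = -1 \<and> z5 = 1 \<and> z6 = 1 \<and> z7 = -1)
    \<or> (z0 = -1 \<and> z3 = 1 \<and> z7 = -1 \<and> z8 = 1)
    \<or> (z1 = -1 \<and> z2 = 1 \<and> z3 = 1 \<and> z7 = -1 \<and> z8 = 1)
    \<or> (z0 = -1 \<and> z4 = 1 \<and> z5 = -1 \<and> z7 = -1 \<and> z8 = 1)
    \<or> (z6 = 1 \<and> z7 = -1 \<and> z8 = 1)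
    \<or> (z0 = 1 \<and> z1 = -1 \<and> z3 = -1 \<and> z4 = 1 \<and> z8 = -1)
    \<or> (z0 = 1 \<and> z1 = -1 \<and> z5 = 1 \<and> z8 = -1)
    \<or> (z2 = -1 \<and> z3 = -1 \<and> z4 = 1 \<and> z8 = -1)
    \<or> (z2 = -1 \<and> z5 = 1 \<and> z8 = -1)
    \<or> (z0 = 1 \<and> z3 = -1 \<and> z7 = 1 \<and> z8 = -1)
    \<or> (z1 = 1 \<and> z2 = -1 \<and> z3 = -1 \<and> z7 = 1 \<and> z8 = -1)
    \<or> (z0 = 1 \<and> z4 = -1 \<and> z5 = 1 \<and> z7 = 1 \<and> z8 = -1)
    \<or> (z1 = -1 \<and> z4 = 1 \<and> z6 = -1 \<and> z8 = -1)
    \<or> (z1 = -1 \<and> z3 = 1 \<and> z5 = 1 \<and> z6 = -1 \<and> z8 = -1)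
    \<or> (z0 = -1 \<and> z2 = -1 \<and> z4 = 1 \<and> z6 = -1 \<and> z8 = -1)
    \<or> (z6 = -1 \<and> z7 = 1 \<and> z8 = -1)"
      by (rule corez[OF ze0 ze1 ze2 ze3 ze4 ze5 ze6 ze7 ze8 bnd nz])
    have bd: "(b 0 \<and> b 4)
      \<or> (b 2 \<and> b 6)
      \<or> (b 1 \<and> b 8)
      \<or> (b 0 \<and> b 5 \<and> b 8)
      \<or> (b 1 \<and> b 4 \<and> b 9)
      \<or> (b 5 \<and> b 9)
      \<or> (b 3 \<and> b 10)
      \<or> (b 2 \<and> b 7 \<and> b 10)
      \<or> (b 3 \<and> b 6 \<and> b 11)
      \<or> (b 7 \<and> b 11)
      \<or> (b 0 \<and> b 6 \<and> b 12)
      \<or> (b 1 \<and> b 6 \<and> b 9 \<and> b 12)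
      \<or> (b 0 \<and> b 7 \<and> b 10 \<and> b 12)
      \<or> (b 1 \<and> b 7 \<and> b 9 \<and> b 10 \<and> b 12)
      \<or> (b 1 \<and> b 10 \<and> b 13)
      \<or> (b 0 \<and> b 5 \<and> b 10 \<and> b 13)
      \<or> (b 1 \<and> b 6 \<and> b 11 \<and> b 13)
      \<or> (b 0 \<and> b 5 \<and> b 6 \<and> b 11 \<and> b 13)
      \<or> (b 2 \<and> b 4 \<and> b 14)
      \<or> (b 2 \<and> b 5 \<and> b 8 \<and> b 14)
      \<or> (b 3 \<and> b 4 \<and> b 11 \<and> b 14)
      \<or> (b 3 \<and> b 5 \<and> b 8 \<and> b 11 \<and> b 14)
      \<or> (b 12 \<and> b 14)
      \<or> (b 2 \<and> b 5 \<and> b 10 \<and> b 13 \<and> b 14)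
      \<or> (b 1 \<and> b 4 \<and> b 11 \<and> b 13 \<and> b 14)
      \<or> (b 5 \<and> b 11 \<and> b 13 \<and> b 14)
      \<or> (b 1 \<and> b 2 \<and> b 4 \<and> b 10 \<and> b 15)
      \<or> (b 2 \<and> b 5 \<and> b 10 \<and> b 15)
      \<or> (b 1 \<and> b 4 \<and> b 11 \<and> b 15)
      \<or> (b 5 \<and> b 11 \<and> b 15)
      \<or> (b 1 \<and> b 10 \<and> b 12 \<and> b 15)
      \<or> (b 0 \<and> b 5 \<and> b 10 \<and> b 12 \<and> b 15)
      \<or> (b 1 \<and> b 6 \<and> b 11 \<and> b 12 \<and> b 15)
      \<or> (b 3 \<and> b 8 \<and> b 16)
      \<or> (b 2 \<and> b 7 \<and> b 8 \<and> b 16)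
      \<or> (b 3 \<and> b 4 \<and> b 9 \<and> b 16)
      \<or> (b 2 \<and> b 4 \<and> b 7 \<and> b 9 \<and> b 16)
      \<or> (b 0 \<and> b 7 \<and> b 8 \<and> b 12 \<and> b 16)
      \<or> (b 3 \<and> b 6 \<and> b 9 \<and> b 12 \<and> b 16)
      \<or> (b 7 \<and> b 9 \<and> b 12 \<and> b 16)
      \<or> (b 13 \<and> b 16)
      \<or> (b 2 \<and> b 4 \<and> b 15 \<and> b 16)
      \<or> (b 2 \<and> b 5 \<and> b 8 \<and> b 15 \<and> b 16)
      \<or> (b 3 \<and> b 4 \<and> b 11 \<and> b 15 \<and> b 16)
      \<or> (b 12 \<and> b 15 \<and> b 16)
      \<or> (b 0 \<and> b 3 \<and> b 6 \<and> b 8 \<and> b 17)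
      \<or> (b 0 \<and> b 7 \<and> b 8 \<and> b 17)
      \<or> (b 3 \<and> b 6 \<and> b 9 \<and> b 17)
      \<or> (b 7 \<and> b 9 \<and> b 17)
      \<or> (b 0 \<and> b 6 \<and> b 13 \<and> b 17)
      \<or> (b 1 \<and> b 6 \<and> b 9 \<and> b 13 \<and> b 17)
      \<or> (b 0 \<and> b 7 \<and> b 10 \<and> b 13 \<and> b 17)
      \<or> (b 3 \<and> b 8 \<and> b 14 \<and> b 17)
      \<or> (b 2 \<and> b 7 \<and> b 8 \<and> b 14 \<and> b 17)
      \<or> (b 3 \<and> b 4 \<and> b 9 \<and> b 14 \<and> b 17)
      \<or> (b 13 \<and> b 14 \<and> b 17)
      \<or> (b 15 \<and> b 17)"
      unfolding zb using zd by (elim disjE) simp_all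
    show ?thesis unfolding Blocks_def using bd by simp
  qed
qed

definition good :: "vtx set set \<Rightarrow> bool" where
  "good X \<longleftrightarrow> grid_graph 3 3 X \<and> (\<exists>B\<in>{B2, B3, B4, B5}. \<exists>H. is_rotation H B \<and> locally_isomorphic 3 3 X H)"

lemma perm0: "(id) permutes {1..3::nat}" by simp
lemma perm1: "(transpose 1 2) permutes {1..3::nat}" by (rule permutes_swap_id) auto
lemma perm2: "(transpose 1 3) permutes {1..3::nat}" by (rule permutes_swap_id) auto
lemma perm3: "(transpose 2 3) permutes {1..3::nat}" by (rule permutes_swap_id) auto
lemma perm4: "(transpose 1 2 \<circ> transpose 2 3) permutes {1..3::nat}" by (intro permutes_compose permutes_swap_id) auto
lemma perm5: "(transpose 2 3 \<circ> transpose 1 2) permutes {1..3::nat}" by (intro permutes_compose permutes_swap_id) auto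

lemma blk0: "set (map ((!) Dl) [0,4]) = (\<lambda>e. mapg (id) (id) ` e) ` rotate_graph 0 B2"
  by (simp add: Dl_def rotate_graph_def B2_def mapg_def rot_def transpose_def numeral_eq_Suc insert_commute)
lemma good0: "good (set (map ((!) Dl) [0,4]))"
  unfolding good_def blk0 by (rule good_block[OF perm0 perm0 _ B2_dbl B2_bal]) simp

lemma blk1: "set (map ((!) Dl) [2,6]) = (\<lambda>e. mapg (transpose 2 3) (id) ` e) ` rotate_graph 0 B2"
  by (simp add: Dl_def rotate_graph_def B2_def mapg_def rot_def transpose_def numeral_eq_Suc insert_commute)
lemma good1: "good (set (map ((!) Dl) [2,6]))"
  unfolding good_def blk1 by (rule good_block[OF perm3 perm0 _ B2_dbl B2_bal]) simp

lemma blk2: "set (map ((!) Dl) [1,8]) = (\<lambda>e. mapg (id) (transpose 2 3) ` e) ` rotate_graph 0 B2"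
  by (simp add: Dl_def rotate_graph_def B2_def mapg_def rot_def transpose_def numeral_eq_Suc insert_commute)
lemma good2: "good (set (map ((!) Dl) [1,8]))"
  unfolding good_def blk2 by (rule good_block[OF perm0 perm3 _ B2_dbl B2_bal]) simp

lemma blk3: "set (map ((!) Dl) [0,5,8]) = (\<lambda>e. mapg (id) (id) ` e) ` rotate_graph 0 B3"
  by (simp add: Dl_def rotate_graph_def B3_def mapg_def rot_def transpose_def numeral_eq_Suc insert_commute)
lemma good3: "good (set (map ((!) Dl) [0,5,8]))"
  unfolding good_def blk3 by (rule good_block[OF perm0 perm0 _ B3_dbl B3_bal]) simp

lemma blk4: "set (map ((!) Dl) [1,4,9]) = (\<lambda>e. mapg (id) (transpose 1 2) ` e) ` rotate_graph 0 B3"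
  by (simp add: Dl_def rotate_graph_def B3_def mapg_def rot_def transpose_def numeral_eq_Suc insert_commute)
lemma good4: "good (set (map ((!) Dl) [1,4,9]))"
  unfolding good_def blk4 by (rule good_block[OF perm0 perm1 _ B3_dbl B3_bal]) simp

lemma blk5: "set (map ((!) Dl) [5,9]) = (\<lambda>e. mapg (id) (transpose 1 3) ` e) ` rotate_graph 0 B2"
  by (simp add: Dl_def rotate_graph_def B2_def mapg_def rot_def transpose_def numeral_eq_Suc insert_commute)
lemma good5: "good (set (map ((!) Dl) [5,9]))"
  unfolding good_def blk5 by (rule good_block[OF perm0 perm2 _ B2_dbl B2_bal]) simp

lemma blk6: "set (map ((!) Dl) [3,10]) = (\<lambda>e. mapg (transpose 2 3) (transpose 2 3) ` e) ` rotate_graph 0 B2"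
  by (simp add: Dl_def rotate_graph_def B2_def mapg_def rot_def transpose_def numeral_eq_Suc insert_commute)
lemma good6: "good (set (map ((!) Dl) [3,10]))"
  unfolding good_def blk6 by (rule good_block[OF perm3 perm3 _ B2_dbl B2_bal]) simp

lemma blk7: "set (map ((!) Dl) [2,7,10]) = (\<lambda>e. mapg (transpose 2 3) (id) ` e) ` rotate_graph 0 B3"
  by (simp add: Dl_def rotate_graph_def B3_def mapg_def rot_def transpose_def numeral_eq_Suc insert_commute)
lemma good7: "good (set (map ((!) Dl) [2,7,10]))"
  unfolding good_def blk7 by (rule good_block[OF perm3 perm0 _ B3_dbl B3_bal]) simp

lemma blk8: "set (map ((!) Dl) [3,6,11]) = (\<lambda>e. mapg (transpose 2 3) (transpose 1 2) ` e) ` rotate_graph 0 B3"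
  by (simp add: Dl_def rotate_graph_def B3_def mapg_def rot_def transpose_def numeral_eq_Suc insert_commute)
lemma good8: "good (set (map ((!) Dl) [3,6,11]))"
  unfolding good_def blk8 by (rule good_block[OF perm3 perm1 _ B3_dbl B3_bal]) simp

lemma blk9: "set (map ((!) Dl) [7,11]) = (\<lambda>e. mapg (transpose 2 3) (transpose 1 3) ` e) ` rotate_graph 0 B2"
  by (simp add: Dl_def rotate_graph_def B2_def mapg_def rot_def transpose_def numeral_eq_Suc insert_commute)
lemma good9: "good (set (map ((!) Dl) [7,11]))"
  unfolding good_def blk9 by (rule good_block[OF perm3 perm2 _ B2_dbl B2_bal]) simp

lemma blk10: "set (map ((!) Dl) [0,6,12]) = (\<lambda>e. mapg (id) (transpose 1 3) ` e) ` rotate_graph 1 B3"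
  by (simp add: Dl_def rotate_graph_def B3_def mapg_def rot_def transpose_def numeral_eq_Suc insert_commute)
lemma good10: "good (set (map ((!) Dl) [0,6,12]))"
  unfolding good_def blk10 by (rule good_block[OF perm0 perm2 _ B3_dbl B3_bal]) simp

lemma blk11: "set (map ((!) Dl) [1,6,9,12]) = (\<lambda>e. mapg (transpose 2 3) (transpose 1 2 \<circ> transpose 2 3) ` e) ` rotate_graph 0 B4"
  by (simp add: Dl_def rotate_graph_def B4_def mapg_def rot_def transpose_def numeral_eq_Suc insert_commute)
lemma good11: "good (set (map ((!) Dl) [1,6,9,12]))"
  unfolding good_def blk11 by (rule good_block[OF perm3 perm4 _ B4_dbl B4_bal]) simp

lemma blk12: "set (map ((!) Dl) [0,7,10,12]) = (\<lambda>e. mapg (id) (transpose 2 3) ` e) ` rotate_graph 0 B4"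
  by (simp add: Dl_def rotate_graph_def B4_def mapg_def rot_def transpose_def numeral_eq_Suc insert_commute)
lemma good12: "good (set (map ((!) Dl) [0,7,10,12]))"
  unfolding good_def blk12 by (rule good_block[OF perm0 perm3 _ B4_dbl B4_bal]) simp

lemma blk13: "set (map ((!) Dl) [1,7,9,10,12]) = (\<lambda>e. mapg (transpose 1 2) (transpose 2 3) ` e) ` rotate_graph 0 B5"
  by (simp add: Dl_def rotate_graph_def B5_def mapg_def rot_def transpose_def numeral_eq_Suc insert_commute)
lemma good13: "good (set (map ((!) Dl) [1,7,9,10,12]))"
  unfolding good_def blk13 by (rule good_block[OF perm1 perm3 _ B5_dbl B5_bal]) simp

lemma blk14: "set (map ((!) Dl) [1,10,13]) = (\<lambda>e. mapg (id) (transpose 1 2 \<circ> transpose 2 3) ` e) ` rotate_graph 1 B3"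
  by (simp add: Dl_def rotate_graph_def B3_def mapg_def rot_def transpose_def numeral_eq_Suc insert_commute)
lemma good14: "good (set (map ((!) Dl) [1,10,13]))"
  unfolding good_def blk14 by (rule good_block[OF perm0 perm4 _ B3_dbl B3_bal]) simp

lemma blk15: "set (map ((!) Dl) [0,5,10,13]) = (\<lambda>e. mapg (transpose 2 3) (transpose 1 3) ` e) ` rotate_graph 0 B4"
  by (simp add: Dl_def rotate_graph_def B4_def mapg_def rot_def transpose_def numeral_eq_Suc insert_commute)
lemma good15: "good (set (map ((!) Dl) [0,5,10,13]))"
  unfolding good_def blk15 by (rule good_block[OF perm3 perm2 _ B4_dbl B4_bal]) simp

lemma blk16: "set (map ((!) Dl) [1,6,11,13]) = (\<lambda>e. mapg (id) (id) ` e) ` rotate_graph 0 B4"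
  by (simp add: Dl_def rotate_graph_def B4_def mapg_def rot_def transpose_def numeral_eq_Suc insert_commute)
lemma good16: "good (set (map ((!) Dl) [1,6,11,13]))"
  unfolding good_def blk16 by (rule good_block[OF perm0 perm0 _ B4_dbl B4_bal]) simp

lemma blk17: "set (map ((!) Dl) [0,5,6,11,13]) = (\<lambda>e. mapg (transpose 1 2) (id) ` e) ` rotate_graph 0 B5"
  by (simp add: Dl_def rotate_graph_def B5_def mapg_def rot_def transpose_def numeral_eq_Suc insert_commute)
lemma good17: "good (set (map ((!) Dl) [0,5,6,11,13]))"
  unfolding good_def blk17 by (rule good_block[OF perm1 perm0 _ B5_dbl B5_bal]) simp

lemma blk18: "set (map ((!) Dl) [2,4,14]) = (\<lambda>e. mapg (id) (transpose 2 3 \<circ> transpose 1 2) ` e) ` rotate_graph 1 B3"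
  by (simp add: Dl_def rotate_graph_def B3_def mapg_def rot_def transpose_def numeral_eq_Suc insert_commute)
lemma good18: "good (set (map ((!) Dl) [2,4,14]))"
  unfolding good_def blk18 by (rule good_block[OF perm0 perm5 _ B3_dbl B3_bal]) simp

lemma blk19: "set (map ((!) Dl) [2,5,8,14]) = (\<lambda>e. mapg (transpose 2 3) (transpose 2 3) ` e) ` rotate_graph 0 B4"
  by (simp add: Dl_def rotate_graph_def B4_def mapg_def rot_def transpose_def numeral_eq_Suc insert_commute)
lemma good19: "good (set (map ((!) Dl) [2,5,8,14]))"
  unfolding good_def blk19 by (rule good_block[OF perm3 perm3 _ B4_dbl B4_bal]) simp

lemma blk20: "set (map ((!) Dl) [3,4,11,14]) = (\<lambda>e. mapg (id) (transpose 1 2 \<circ> transpose 2 3) ` e) ` rotate_graph 0 B4"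
  by (simp add: Dl_def rotate_graph_def B4_def mapg_def rot_def transpose_def numeral_eq_Suc insert_commute)
lemma good20: "good (set (map ((!) Dl) [3,4,11,14]))"
  unfolding good_def blk20 by (rule good_block[OF perm0 perm4 _ B4_dbl B4_bal]) simp

lemma blk21: "set (map ((!) Dl) [3,5,8,11,14]) = (\<lambda>e. mapg (transpose 1 2) (transpose 1 2 \<circ> transpose 2 3) ` e) ` rotate_graph 0 B5"
  by (simp add: Dl_def rotate_graph_def B5_def mapg_def rot_def transpose_def numeral_eq_Suc insert_commute)
lemma good21: "good (set (map ((!) Dl) [3,5,8,11,14]))"
  unfolding good_def blk21 by (rule good_block[OF perm1 perm4 _ B5_dbl B5_bal]) simp

lemma blk22: "set (map ((!) Dl) [12,14]) = (\<lambda>e. mapg (transpose 1 3) (id) ` e) ` rotate_graph 0 B2"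
  by (simp add: Dl_def rotate_graph_def B2_def mapg_def rot_def transpose_def numeral_eq_Suc insert_commute)
lemma good22: "good (set (map ((!) Dl) [12,14]))"
  unfolding good_def blk22 by (rule good_block[OF perm2 perm0 _ B2_dbl B2_bal]) simp

lemma blk23: "set (map ((!) Dl) [2,5,10,13,14]) = (\<lambda>e. mapg (transpose 2 3) (transpose 1 2) ` e) ` rotate_graph 0 B5"
  by (simp add: Dl_def rotate_graph_def B5_def mapg_def rot_def transpose_def numeral_eq_Suc insert_commute)
lemma good23: "good (set (map ((!) Dl) [2,5,10,13,14]))"
  unfolding good_def blk23 by (rule good_block[OF perm3 perm1 _ B5_dbl B5_bal]) simp

lemma blk24: "set (map ((!) Dl) [1,4,11,13,14]) = (\<lambda>e. mapg (id) (transpose 2 3 \<circ> transpose 1 2) ` e) ` rotate_graph 0 B5"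
  by (simp add: Dl_def rotate_graph_def B5_def mapg_def rot_def transpose_def numeral_eq_Suc insert_commute)
lemma good24: "good (set (map ((!) Dl) [1,4,11,13,14]))"
  unfolding good_def blk24 by (rule good_block[OF perm0 perm5 _ B5_dbl B5_bal]) simp

lemma blk25: "set (map ((!) Dl) [5,11,13,14]) = (\<lambda>e. mapg (transpose 1 2) (transpose 2 3 \<circ> transpose 1 2) ` e) ` rotate_graph 0 B4"
  by (simp add: Dl_def rotate_graph_def B4_def mapg_def rot_def transpose_def numeral_eq_Suc insert_commute)
lemma good25: "good (set (map ((!) Dl) [5,11,13,14]))"
  unfolding good_def blk25 by (rule good_block[OF perm1 perm5 _ B4_dbl B4_bal]) simp

lemma blk26: "set (map ((!) Dl) [1,2,4,10,15]) = (\<lambda>e. mapg (transpose 1 2) (transpose 1 2) ` e) ` rotate_graph 0 B5"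
  by (simp add: Dl_def rotate_graph_def B5_def mapg_def rot_def transpose_def numeral_eq_Suc insert_commute)
lemma good26: "good (set (map ((!) Dl) [1,2,4,10,15]))"
  unfolding good_def blk26 by (rule good_block[OF perm1 perm1 _ B5_dbl B5_bal]) simp

lemma blk27: "set (map ((!) Dl) [2,5,10,15]) = (\<lambda>e. mapg (id) (transpose 1 2) ` e) ` rotate_graph 0 B4"
  by (simp add: Dl_def rotate_graph_def B4_def mapg_def rot_def transpose_def numeral_eq_Suc insert_commute)
lemma good27: "good (set (map ((!) Dl) [2,5,10,15]))"
  unfolding good_def blk27 by (rule good_block[OF perm0 perm1 _ B4_dbl B4_bal]) simp

lemma blk28: "set (map ((!) Dl) [1,4,11,15]) = (\<lambda>e. mapg (transpose 2 3) (transpose 2 3 \<circ> transpose 1 2) ` e) ` rotate_graph 0 B4"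
  by (simp add: Dl_def rotate_graph_def B4_def mapg_def rot_def transpose_def numeral_eq_Suc insert_commute)
lemma good28: "good (set (map ((!) Dl) [1,4,11,15]))"
  unfolding good_def blk28 by (rule good_block[OF perm3 perm5 _ B4_dbl B4_bal]) simp

lemma blk29: "set (map ((!) Dl) [5,11,15]) = (\<lambda>e. mapg (id) (transpose 2 3) ` e) ` rotate_graph 1 B3"
  by (simp add: Dl_def rotate_graph_def B3_def mapg_def rot_def transpose_def numeral_eq_Suc insert_commute)
lemma good29: "good (set (map ((!) Dl) [5,11,15]))"
  unfolding good_def blk29 by (rule good_block[OF perm0 perm3 _ B3_dbl B3_bal]) simp

lemma blk30: "set (map ((!) Dl) [1,10,12,15]) = (\<lambda>e. mapg (transpose 1 2) (transpose 1 3) ` e) ` rotate_graph 0 B4"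
  by (simp add: Dl_def rotate_graph_def B4_def mapg_def rot_def transpose_def numeral_eq_Suc insert_commute)
lemma good30: "good (set (map ((!) Dl) [1,10,12,15]))"
  unfolding good_def blk30 by (rule good_block[OF perm1 perm2 _ B4_dbl B4_bal]) simp

lemma blk31: "set (map ((!) Dl) [0,5,10,12,15]) = (\<lambda>e. mapg (id) (transpose 1 3) ` e) ` rotate_graph 0 B5"
  by (simp add: Dl_def rotate_graph_def B5_def mapg_def rot_def transpose_def numeral_eq_Suc insert_commute)
lemma good31: "good (set (map ((!) Dl) [0,5,10,12,15]))"
  unfolding good_def blk31 by (rule good_block[OF perm0 perm2 _ B5_dbl B5_bal]) simp

lemma blk32: "set (map ((!) Dl) [1,6,11,12,15]) = (\<lambda>e. mapg (transpose 2 3) (id) ` e) ` rotate_graph 0 B5"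
  by (simp add: Dl_def rotate_graph_def B5_def mapg_def rot_def transpose_def numeral_eq_Suc insert_commute)
lemma good32: "good (set (map ((!) Dl) [1,6,11,12,15]))"
  unfolding good_def blk32 by (rule good_block[OF perm3 perm0 _ B5_dbl B5_bal]) simp

lemma blk33: "set (map ((!) Dl) [3,8,16]) = (\<lambda>e. mapg (id) (transpose 1 2) ` e) ` rotate_graph 1 B3"
  by (simp add: Dl_def rotate_graph_def B3_def mapg_def rot_def transpose_def numeral_eq_Suc insert_commute)
lemma good33: "good (set (map ((!) Dl) [3,8,16]))"
  unfolding good_def blk33 by (rule good_block[OF perm0 perm1 _ B3_dbl B3_bal]) simp

lemma blk34: "set (map ((!) Dl) [2,7,8,16]) = (\<lambda>e. mapg (id) (transpose 1 3) ` e) ` rotate_graph 0 B4"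
  by (simp add: Dl_def rotate_graph_def B4_def mapg_def rot_def transpose_def numeral_eq_Suc insert_commute)
lemma good34: "good (set (map ((!) Dl) [2,7,8,16]))"
  unfolding good_def blk34 by (rule good_block[OF perm0 perm2 _ B4_dbl B4_bal]) simp

lemma blk35: "set (map ((!) Dl) [3,4,9,16]) = (\<lambda>e. mapg (transpose 2 3) (id) ` e) ` rotate_graph 0 B4"
  by (simp add: Dl_def rotate_graph_def B4_def mapg_def rot_def transpose_def numeral_eq_Suc insert_commute)
lemma good35: "good (set (map ((!) Dl) [3,4,9,16]))"
  unfolding good_def blk35 by (rule good_block[OF perm3 perm0 _ B4_dbl B4_bal]) simp

lemma blk36: "set (map ((!) Dl) [2,4,7,9,16]) = (\<lambda>e. mapg (transpose 1 2) (transpose 1 3) ` e) ` rotate_graph 0 B5"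
  by (simp add: Dl_def rotate_graph_def B5_def mapg_def rot_def transpose_def numeral_eq_Suc insert_commute)
lemma good36: "good (set (map ((!) Dl) [2,4,7,9,16]))"
  unfolding good_def blk36 by (rule good_block[OF perm1 perm2 _ B5_dbl B5_bal]) simp

lemma blk37: "set (map ((!) Dl) [0,7,8,12,16]) = (\<lambda>e. mapg (id) (transpose 1 2) ` e) ` rotate_graph 0 B5"
  by (simp add: Dl_def rotate_graph_def B5_def mapg_def rot_def transpose_def numeral_eq_Suc insert_commute)
lemma good37: "good (set (map ((!) Dl) [0,7,8,12,16]))"
  unfolding good_def blk37 by (rule good_block[OF perm0 perm1 _ B5_dbl B5_bal]) simp

lemma blk38: "set (map ((!) Dl) [3,6,9,12,16]) = (\<lambda>e. mapg (transpose 2 3) (transpose 2 3 \<circ> transpose 1 2) ` e) ` rotate_graph 0 B5"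
  by (simp add: Dl_def rotate_graph_def B5_def mapg_def rot_def transpose_def numeral_eq_Suc insert_commute)
lemma good38: "good (set (map ((!) Dl) [3,6,9,12,16]))"
  unfolding good_def blk38 by (rule good_block[OF perm3 perm5 _ B5_dbl B5_bal]) simp

lemma blk39: "set (map ((!) Dl) [7,9,12,16]) = (\<lambda>e. mapg (transpose 1 2) (transpose 1 2) ` e) ` rotate_graph 0 B4"
  by (simp add: Dl_def rotate_graph_def B4_def mapg_def rot_def transpose_def numeral_eq_Suc insert_commute)
lemma good39: "good (set (map ((!) Dl) [7,9,12,16]))"
  unfolding good_def blk39 by (rule good_block[OF perm1 perm1 _ B4_dbl B4_bal]) simp

lemma blk40: "set (map ((!) Dl) [13,16]) = (\<lambda>e. mapg (transpose 1 3) (transpose 2 3) ` e) ` rotate_graph 0 B2"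
  by (simp add: Dl_def rotate_graph_def B2_def mapg_def rot_def transpose_def numeral_eq_Suc insert_commute)
lemma good40: "good (set (map ((!) Dl) [13,16]))"
  unfolding good_def blk40 by (rule good_block[OF perm2 perm3 _ B2_dbl B2_bal]) simp

lemma blk41: "set (map ((!) Dl) [2,4,15,16]) = (\<lambda>e. mapg (transpose 1 2) (transpose 2 3) ` e) ` rotate_graph 0 B4"
  by (simp add: Dl_def rotate_graph_def B4_def mapg_def rot_def transpose_def numeral_eq_Suc insert_commute)
lemma good41: "good (set (map ((!) Dl) [2,4,15,16]))"
  unfolding good_def blk41 by (rule good_block[OF perm1 perm3 _ B4_dbl B4_bal]) simp

lemma blk42: "set (map ((!) Dl) [2,5,8,15,16]) = (\<lambda>e. mapg (id) (transpose 2 3) ` e) ` rotate_graph 0 B5"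
  by (simp add: Dl_def rotate_graph_def B5_def mapg_def rot_def transpose_def numeral_eq_Suc insert_commute)
lemma good42: "good (set (map ((!) Dl) [2,5,8,15,16]))"
  unfolding good_def blk42 by (rule good_block[OF perm0 perm3 _ B5_dbl B5_bal]) simp

lemma blk43: "set (map ((!) Dl) [3,4,11,15,16]) = (\<lambda>e. mapg (transpose 2 3) (transpose 1 2 \<circ> transpose 2 3) ` e) ` rotate_graph 0 B5"
  by (simp add: Dl_def rotate_graph_def B5_def mapg_def rot_def transpose_def numeral_eq_Suc insert_commute)
lemma good43: "good (set (map ((!) Dl) [3,4,11,15,16]))"
  unfolding good_def blk43 by (rule good_block[OF perm3 perm4 _ B5_dbl B5_bal]) simp

lemma blk44: "set (map ((!) Dl) [12,15,16]) = (\<lambda>e. mapg (transpose 1 3) (transpose 1 2) ` e) ` rotate_graph 0 B3"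
  by (simp add: Dl_def rotate_graph_def B3_def mapg_def rot_def transpose_def numeral_eq_Suc insert_commute)
lemma good44: "good (set (map ((!) Dl) [12,15,16]))"
  unfolding good_def blk44 by (rule good_block[OF perm2 perm1 _ B3_dbl B3_bal]) simp

lemma blk45: "set (map ((!) Dl) [0,3,6,8,17]) = (\<lambda>e. mapg (transpose 1 2) (transpose 2 3 \<circ> transpose 1 2) ` e) ` rotate_graph 0 B5"
  by (simp add: Dl_def rotate_graph_def B5_def mapg_def rot_def transpose_def numeral_eq_Suc insert_commute)
lemma good45: "good (set (map ((!) Dl) [0,3,6,8,17]))"
  unfolding good_def blk45 by (rule good_block[OF perm1 perm5 _ B5_dbl B5_bal]) simp

lemma blk46: "set (map ((!) Dl) [0,7,8,17]) = (\<lambda>e. mapg (transpose 2 3) (transpose 1 2) ` e) ` rotate_graph 0 B4"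
  by (simp add: Dl_def rotate_graph_def B4_def mapg_def rot_def transpose_def numeral_eq_Suc insert_commute)
lemma good46: "good (set (map ((!) Dl) [0,7,8,17]))"
  unfolding good_def blk46 by (rule good_block[OF perm3 perm1 _ B4_dbl B4_bal]) simp

lemma blk47: "set (map ((!) Dl) [3,6,9,17]) = (\<lambda>e. mapg (id) (transpose 2 3 \<circ> transpose 1 2) ` e) ` rotate_graph 0 B4"
  by (simp add: Dl_def rotate_graph_def B4_def mapg_def rot_def transpose_def numeral_eq_Suc insert_commute)
lemma good47: "good (set (map ((!) Dl) [3,6,9,17]))"
  unfolding good_def blk47 by (rule good_block[OF perm0 perm5 _ B4_dbl B4_bal]) simp

lemma blk48: "set (map ((!) Dl) [7,9,17]) = (\<lambda>e. mapg (id) (id) ` e) ` rotate_graph 1 B3"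
  by (simp add: Dl_def rotate_graph_def B3_def mapg_def rot_def transpose_def numeral_eq_Suc insert_commute)
lemma good48: "good (set (map ((!) Dl) [7,9,17]))"
  unfolding good_def blk48 by (rule good_block[OF perm0 perm0 _ B3_dbl B3_bal]) simp

lemma blk49: "set (map ((!) Dl) [0,6,13,17]) = (\<lambda>e. mapg (transpose 1 2) (transpose 1 2 \<circ> transpose 2 3) ` e) ` rotate_graph 0 B4"
  by (simp add: Dl_def rotate_graph_def B4_def mapg_def rot_def transpose_def numeral_eq_Suc insert_commute)
lemma good49: "good (set (map ((!) Dl) [0,6,13,17]))"
  unfolding good_def blk49 by (rule good_block[OF perm1 perm4 _ B4_dbl B4_bal]) simp

lemma blk50: "set (map ((!) Dl) [1,6,9,13,17]) = (\<lambda>e. mapg (id) (transpose 1 2 \<circ> transpose 2 3) ` e) ` rotate_graph 0 B5"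
  by (simp add: Dl_def rotate_graph_def B5_def mapg_def rot_def transpose_def numeral_eq_Suc insert_commute)
lemma good50: "good (set (map ((!) Dl) [1,6,9,13,17]))"
  unfolding good_def blk50 by (rule good_block[OF perm0 perm4 _ B5_dbl B5_bal]) simp

lemma blk51: "set (map ((!) Dl) [0,7,10,13,17]) = (\<lambda>e. mapg (transpose 2 3) (transpose 2 3) ` e) ` rotate_graph 0 B5"
  by (simp add: Dl_def rotate_graph_def B5_def mapg_def rot_def transpose_def numeral_eq_Suc insert_commute)
lemma good51: "good (set (map ((!) Dl) [0,7,10,13,17]))"
  unfolding good_def blk51 by (rule good_block[OF perm3 perm3 _ B5_dbl B5_bal]) simp

lemma blk52: "set (map ((!) Dl) [3,8,14,17]) = (\<lambda>e. mapg (transpose 1 2) (id) ` e) ` rotate_graph 0 B4"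
  by (simp add: Dl_def rotate_graph_def B4_def mapg_def rot_def transpose_def numeral_eq_Suc insert_commute)
lemma good52: "good (set (map ((!) Dl) [3,8,14,17]))"
  unfolding good_def blk52 by (rule good_block[OF perm1 perm0 _ B4_dbl B4_bal]) simp

lemma blk53: "set (map ((!) Dl) [2,7,8,14,17]) = (\<lambda>e. mapg (transpose 2 3) (transpose 1 3) ` e) ` rotate_graph 0 B5"
  by (simp add: Dl_def rotate_graph_def B5_def mapg_def rot_def transpose_def numeral_eq_Suc insert_commute)
lemma good53: "good (set (map ((!) Dl) [2,7,8,14,17]))"
  unfolding good_def blk53 by (rule good_block[OF perm3 perm2 _ B5_dbl B5_bal]) simp

lemma blk54: "set (map ((!) Dl) [3,4,9,14,17]) = (\<lambda>e. mapg (id) (id) ` e) ` rotate_graph 0 B5"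
  by (simp add: Dl_def rotate_graph_def B5_def mapg_def rot_def transpose_def numeral_eq_Suc insert_commute)
lemma good54: "good (set (map ((!) Dl) [3,4,9,14,17]))"
  unfolding good_def blk54 by (rule good_block[OF perm0 perm0 _ B5_dbl B5_bal]) simp

lemma blk55: "set (map ((!) Dl) [13,14,17]) = (\<lambda>e. mapg (transpose 1 3) (id) ` e) ` rotate_graph 0 B3"
  by (simp add: Dl_def rotate_graph_def B3_def mapg_def rot_def transpose_def numeral_eq_Suc insert_commute)
lemma good55: "good (set (map ((!) Dl) [13,14,17]))"
  unfolding good_def blk55 by (rule good_block[OF perm2 perm0 _ B3_dbl B3_bal]) simp

lemma blk56: "set (map ((!) Dl) [15,17]) = (\<lambda>e. mapg (transpose 1 3) (transpose 1 3) ` e) ` rotate_graph 0 B2"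
  by (simp add: Dl_def rotate_graph_def B2_def mapg_def rot_def transpose_def numeral_eq_Suc insert_commute)
lemma good56: "good (set (map ((!) Dl) [15,17]))"
  unfolding good_def blk56 by (rule good_block[OF perm2 perm2 _ B2_dbl B2_bal]) simp

lemma blocks_good: "ks \<in> set Blocks \<Longrightarrow> good (set (map ((!) Dl) ks))"
  unfolding Blocks_def list.set insert_iff empty_iff
  by (elim disjE) (simp_all only: good0 good1 good2 good3 good4 good5 good6 good7 good8 good9 good10 good11 good12 good13 good14 good15 good16 good17 good18 good19 good20 good21 good22 good23 good24 good25 good26 good27 good28 good29 good30 good31 good32 good33 good34 good35 good36 good37 good38 good39 good40 good41 good42 good43 good44 good45 good46 good47 good48 good49 good50 good51 good52 good53 good54 good55 good56)

lemma blocks_ne: "ks \<in> set Blocks \<Longrightarrow> ks \<noteq> []"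
  unfolding Blocks_def by auto




lemma disj_cons:
  assumes "\<forall>s<length Xs. \<forall>t<length Xs. s \<noteq> t \<longrightarrow> Xs ! s \<inter> Xs ! t = {}"
    and "\<forall>Y\<in>set Xs. X \<inter> Y = {}"
  shows "\<forall>s<length (X # Xs). \<forall>t<length (X # Xs). s \<noteq> t \<longrightarrow> (X # Xs) ! s \<inter> (X # Xs) ! t = {}"
proof (intro allI impI)
  fix s t assume st: "s < length (X # Xs)" "t < length (X # Xs)" "s \<noteq> t"
  show "(X # Xs) ! s \<inter> (X # Xs) ! t = {}"
  proof (cases s)
    case 0
    then obtain t' where "t = Suc t'" "t' < length Xs" using st by (cases t) auto
    then show ?thesis using 0 assms(2) nth_mem by auto
  next
    case (Suc s')
    show ?thesis
    proof (cases t)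
      case 0
      then show ?thesis using Suc st assms(2) nth_mem by fastforce
    next
      case (Suc t')
      then show ?thesis using \<open>s = Suc s'\<close> st assms(1) by auto
    qed
  qed
qed

lemma good_bal': "good X \<Longrightarrow> bal X"
  unfolding good_def
  using good_bal B2_dbl B2_bal B3_dbl B3_bal B4_dbl B4_bal B5_dbl B5_bal by blast

lemma finite_Dl: "finite (set Dl)" by simp

lemma decomp:
  assumes "E \<subseteq> set Dl" "bal E"
  shows "\<exists>Xs. (\<forall>s<length Xs. \<forall>t<length Xs. s \<noteq> t \<longrightarrow> Xs ! s \<inter> Xs ! t = {}) \<and>
             \<Union>(set Xs) = E \<and> (\<forall>X\<in>set Xs. good X)"
  using assms
proof (induction "card E" arbitrary: E rule: less_induct)
  case less
  show ?case
  proof (cases "E = {}")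
    case True
    then show ?thesis by (intro exI[of _ "[]"]) simp
  next
    case False
    then obtain e where "e \<in> E" by blast
    then have "e \<in> set Dl" using less.prems(1) by blast
    then obtain k where k: "k < length Dl" "Dl ! k = e" by (metis in_set_conv_nth)
    then have ne: "\<exists>k<18. inE E k" using \<open>e \<in> E\<close> Dl_len unfolding inE_def by auto
    note eqs = bal_eqs[OF less.prems(1), THEN iffD1, OF less.prems(2)]
    obtain ks where ks: "ks \<in> set Blocks" "\<forall>k\<in>set ks. inE E k"
      using core_b[of "inE E", OF eqs ne] by blast
    define X where "X = set (map ((!) Dl) ks)"
    have XE: "X \<subseteq> E" using ks(2) unfolding X_def inE_def by auto
    have gX: "good X" using blocks_good[OF ks(1)] unfolding X_def .
    have bX: "bal X" using good_bal'[OF gX] .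
    have Xne: "X \<noteq> {}" using blocks_ne[OF ks(1)] unfolding X_def by simp
    have fE: "finite E" using less.prems(1) finite_Dl finite_subset by blast
    have lt: "card (E - X) < card E"
    proof (rule psubset_card_mono[OF fE])
      show "E - X \<subset> E" using XE Xne by blast
    qed
    have sub': "E - X \<subseteq> set Dl" using less.prems(1) by blast
    have bal': "bal (E - X)" by (rule bal_diff[OF fE XE less.prems(2) bX])
    obtain Xs where Xs: "\<forall>s<length Xs. \<forall>t<length Xs. s \<noteq> t \<longrightarrow> Xs ! s \<inter> Xs ! t = {}"
      "\<Union>(set Xs) = E - X" "\<forall>Y\<in>set Xs. good Y"
      using less.hyps[OF lt sub' bal'] by blast
    have "\<forall>Y\<in>set Xs. X \<inter> Y = {}" using Xs(2) by blast
    then have "\<forall>s<length (X # Xs). \<forall>t<length (X # Xs). s \<noteq> t \<longrightarrow> (X # Xs) ! s \<inter> (X # Xs) ! t = {}"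
      using disj_cons Xs(1) by blast
    moreover have "\<Union>(set (X # Xs)) = E" using Xs(2) XE by auto
    moreover have "\<forall>Y\<in>set (X # Xs). good Y" using Xs(3) gX by simp
    ultimately show ?thesis by blast
  qed
qed

lemma diag_all: "\<forall>i\<in>{1,2,3}. \<forall>j\<in>{1,2,3}. \<forall>k\<in>{1,2,3}. \<forall>l\<in>{1,2,3}.
   i \<noteq> k \<longrightarrow> j \<noteq> l \<longrightarrow> {(i,j),(k,l)} \<in> set Dl"
  by (simp add: Dl_def doubleton_eq_iff)

lemma diag_in_Dl:
  assumes "i \<in> {1..3}" "j \<in> {1..3}" "k \<in> {1..3}" "l \<in> {1..3}" "i \<noteq> k" "j \<noteq> l"
  shows "{(i,j),(k,l)} \<in> set Dl"
proof -
  have e: "{1..3::nat} = {1,2,3}" by auto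
  show ?thesis using diag_all assms unfolding e by blast
qed

lemma diag_sub:
  assumes "grid_graph 3 3 E" "\<forall>e\<in>E. diagonal_edge e"
  shows "E \<subseteq> set Dl"
proof
  fix e assume e: "e \<in> E"
  have "diagonal_edge e" using assms(2) e by blast
  then obtain i j k l where ijkl: "e = {(i,j),(k,l)}" "i \<noteq> k" "j \<noteq> l"
    unfolding diagonal_edge_def by blast
  have "\<exists>p q. p \<in> grid 3 3 \<and> q \<in> grid 3 3 \<and> p \<noteq> q \<and> e = {p, q}"
    using assms(1) e unfolding grid_graph_def by blast
  then have eg: "e \<subseteq> grid 3 3" by blast
  have "(i,j) \<in> e" "(k,l) \<in> e" using ijkl(1) by simp_all
  then have "(i,j) \<in> grid 3 3" "(k,l) \<in> grid 3 3" using eg by blast+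
  then have "i \<in> {1..3}" "j \<in> {1..3}" "k \<in> {1..3}" "l \<in> {1..3}"
    unfolding grid_def by (simp_all only: mem_Times_iff fst_conv snd_conv)
  then have "{(i,j),(k,l)} \<in> set Dl" using diag_in_Dl ijkl(2,3) by blast
  then show "e \<in> set Dl" using ijkl(1) by simp
qed

theorem mainTheorem15:
  fixes E :: "vtx set set"
  assumes "grid_graph 3 3 E"
    and "\<forall>e\<in>E. diagonal_edge e"
  shows "degree_criterion 3 3 E \<longleftrightarrow>
    (\<exists>Xs :: vtx set set list.
        (\<forall>s<length Xs. \<forall>t<length Xs. s \<noteq> t \<longrightarrow> Xs ! s \<inter> Xs ! t = {}) \<and>
        \<Union>(set Xs) = E \<and>
        (\<forall>X\<in>set Xs. grid_graph 3 3 X \<and>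
           (\<exists>B\<in>{B2, B3, B4, B5}. \<exists>H. is_rotation H B \<and> locally_isomorphic 3 3 X H)))"
proof -
  have sub: "E \<subseteq> set Dl" by (rule diag_sub[OF assms])
  have dc: "degree_criterion 3 3 E \<longleftrightarrow> bal E" by (rule dc_iff[OF assms(1)])
  show ?thesis
  proof
    assume "degree_criterion 3 3 E"
    then have "bal E" using dc by simp
    then show "\<exists>Xs :: vtx set set list.
        (\<forall>s<length Xs. \<forall>t<length Xs. s \<noteq> t \<longrightarrow> Xs ! s \<inter> Xs ! t = {}) \<and>
        \<Union>(set Xs) = E \<and>
        (\<forall>X\<in>set Xs. grid_graph 3 3 X \<and>
           (\<exists>B\<in>{B2, B3, B4, B5}. \<exists>H. is_rotation H B \<and> locally_isomorphic 3 3 X H))"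
      using decomp[OF sub] unfolding good_def by blast
  next
    assume "\<exists>Xs :: vtx set set list.
        (\<forall>s<length Xs. \<forall>t<length Xs. s \<noteq> t \<longrightarrow> Xs ! s \<inter> Xs ! t = {}) \<and>
        \<Union>(set Xs) = E \<and>
        (\<forall>X\<in>set Xs. grid_graph 3 3 X \<and>
           (\<exists>B\<in>{B2, B3, B4, B5}. \<exists>H. is_rotation H B \<and> locally_isomorphic 3 3 X H))"
    then obtain Xs where Xs: "\<forall>s<length Xs. \<forall>t<length Xs. s \<noteq> t \<longrightarrow> Xs ! s \<inter> Xs ! t = {}"
      "\<Union>(set Xs) = E" "\<forall>X\<in>set Xs. good X"
      unfolding good_def by blast
    have fE: "finite E" using sub finite_Dl finite_subset by blast
    have "\<forall>X\<in>set Xs. bal X \<and> finite X"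
    proof
      fix X assume "X \<in> set Xs"
      then have "bal X" "X \<subseteq> E" using Xs good_bal' by auto
      then show "bal X \<and> finite X" using fE finite_subset by blast
    qed
    then have "bal E" using bal_Union[OF Xs(1)] Xs(2) by simp
    then show "degree_criterion 3 3 E" using dc by simp
  qed
qed


end
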